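(* Let $A\subseteq\mathbb{R}^d$ ($d\ge2$) be a nonempty compact set and $s\in[0,d)$. If the support content $\mathcal S^s_{d-1}(A)=\lim_{\varepsilon\to0^+}\varepsilon^{s-(d-1)}\mu_{d-1}(A_\varepsilon)$ exists in $[0,\infty)$, then the outer Minkowski content $\mathcal M^s_{\mathrm{out}}(A)=\lim_{\varepsilon\to0^+}\varepsilon^{s-d}V(A_\varepsilon\setminus A)$ exists and $$\mathcal M^s_{\mathrm{out}}(A)=\frac{2}{d-s}\,\mathcal S^s_{d-1}(A).$$
   Context: $V$ is $d$-dimensional Lebesgue measure, $\omega_k=\frac{k\pi^{k/2}}{\Gamma(k/2+1)}$, $A_\varepsilon=\{x:\mathrm{dist}(x,A)\le\varepsilon\}$. Normal bundle of a closed set $C$: $\mathrm{Unp}(C)$ is the set of $y\notin C$ with a unique nearest point $\pi_C(y)\in C$; $N(C)=\{(\pi_C(y),(y-\pi_C(y))/\mathrm{dist}(y,C)):y\in\mathrm{Unp}(C)\}$; local reach $\delta(C,x,u)=\sup\{t\ge0:\pi_C(x+tu)=x\}$. Support measures (Hug–Last–Weil): for closed $C$, the signed measures $\mu_i(C;\cdot)$, $i=0,\dots,d-1$, on $N(C)$ such that $\int_{N(C)}\mathbb 1\{x\in B\}\min\{r,\delta(C,x,u)\}^{d-i}|\mu_i|(C;d(x,u))<\infty$ for compact $B$, $r>0$, and for every measurable compactly supported $f$, $\int_{\mathbb{R}^d\setminus C}f=\sum_{i=0}^{d-1}\omega_{d-i}\int_0^\infty\int_{N(C)}t^{d-i-1}\mathbb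 1\{t<\delta(C,x,u)\}f(x+tu)\mu_i(C;d(x,u))dt$. Write $\mu_{d-1}(A_\varepsilon)=\mu_{d-1}(A_\varepsilon;N(A_\varepsilon))$ for the total mass. *)

theory Defs
  imports "HOL-Analysis.Analysis"
begin

definition omega :: "nat \<Rightarrow> real" where
  "omega k = real k * pi powr (real k / 2) / Gamma (real k / 2 + 1)"

definition parset :: "'a::euclidean_space set \<Rightarrow> real \<Rightarrow> 'a set" where
  "parset A e = {x. infdist x A \<le> e}"

definition unique_nearest :: "'a::euclidean_space set \<Rightarrow> 'a \<Rightarrow> 'a \<Rightarrow> bool" where
  "unique_nearest C y x \<longleftrightarrow> x \<in> C \<and> (\<forall>z\<in>C. z \<noteq> x \<longrightarrow> dist y x < dist y z)"

definition Unp :: "'a::euclidean_space set \<Rightarrow> 'a set" where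
  "Unp C = {y. y \<notin> C \<and> (\<exists>x. unique_nearest C y x)}"

definition proj :: "'a::euclidean_space set \<Rightarrow> 'a \<Rightarrow> 'a" where
  "proj C y = (THE x. unique_nearest C y x)"

definition normal_bundle :: "'a::euclidean_space set \<Rightarrow> ('a \<times> 'a) set" where
  "normal_bundle C = (\<lambda>y. (proj C y, (1 / infdist y C) *\<^sub>R (y - proj C y))) ` Unp C"

definition local_reach :: "'a::euclidean_space set \<Rightarrow> 'a \<Rightarrow> 'a \<Rightarrow> ereal" where
  "local_reach C x u = (SUP t\<in>{t. t \<ge> 0 \<and> unique_nearest C (x + t *\<^sub>R u) x}. ereal t)"

text \<open>A signed measure on N(C) is represented by its Jordan decomposition (M+, M-):
  two mutually singular Borel measures on R^d x R^d, both concentrated on N(C).\<close>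
definition signed_on :: "('a::euclidean_space \<times> 'a) set \<Rightarrow> ('a \<times> 'a) measure \<times> ('a \<times> 'a) measure \<Rightarrow> bool" where
  "signed_on N m \<longleftrightarrow>
     sets (fst m) = sets borel \<and> sets (snd m) = sets borel \<and>
     (AE p in fst m. p \<in> N) \<and> (AE p in snd m. p \<in> N) \<and>
     (\<exists>S\<in>sets borel. emeasure (fst m) S = 0 \<and> emeasure (snd m) (UNIV - S) = 0)"

definition sint :: "('a::euclidean_space \<times> 'a) measure \<times> ('a \<times> 'a) measure \<Rightarrow> ('a \<times> 'a \<Rightarrow> real) \<Rightarrow> real" where
  "sint m f = (\<integral>p. f p \<partial>(fst m)) - (\<integral>p. f p \<partial>(snd m))"

definition tv_nn_int :: "('a::euclidean_space \<times> 'a) measure \<times> ('a \<times> 'a) measure \<Rightarrow> ('a \<times> 'a \<Rightarrow> ennreal) \<Rightarrow> ennreal" where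
  "tv_nn_int m f = (\<integral>\<^sup>+p. f p \<partial>(fst m)) + (\<integral>\<^sup>+p. f p \<partial>(snd m))"

definition support_measures :: "'a::euclidean_space set \<Rightarrow> (nat \<Rightarrow> ('a \<times> 'a) measure \<times> ('a \<times> 'a) measure) \<Rightarrow> bool" where
  "support_measures C mu \<longleftrightarrow>
     (\<forall>i<DIM('a). signed_on (normal_bundle C) (mu i)) \<and>
     (\<forall>i<DIM('a). \<forall>B r. compact B \<and> r > 0 \<longrightarrow>
        tv_nn_int (mu i) (\<lambda>(x,u). indicator B x *
            ennreal (real_of_ereal (min (ereal r) (local_reach C x u)) ^ (DIM('a) - i))) < \<infinity>) \<and>
     (\<forall>f::'a \<Rightarrow> real. f \<in> borel_measurable borel \<and> bounded (range f) \<and> bounded {x. f x \<noteq> 0} \<longrightarrow>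
        (\<integral>y. indicator (UNIV - C) y * f y \<partial>lborel) =
        (\<Sum>i<DIM('a). omega (DIM('a) - i) *
           (LINT t:{0..}|lborel. sint (mu i) (\<lambda>(x,u). t ^ (DIM('a) - i - 1) *
               (if ereal t < local_reach C x u then 1 else 0) * f (x + t *\<^sub>R u)))))"

definition total_mass :: "('a::euclidean_space \<times> 'a) measure \<times> ('a \<times> 'a) measure \<Rightarrow> real" where
  "total_mass m = measure (fst m) UNIV - measure (snd m) UNIV"

end

theory Submission
  imports Defs
begin

lemma UN_dist:
  assumes "unique_nearest C y x"
  shows "infdist y C = dist y x"
proof -
  have xC: "x \<in> C" using assms unfolding unique_nearest_def by auto
  have "dist y x \<le> infdist y C"
    unfolding infdist_def using xC
    by (auto intro!: cINF_greatest) (metis assms less_eq_real_def unique_nearest_def)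
  moreover have "infdist y C \<le> dist y x" using xC by (rule infdist_le)
  ultimately show ?thesis by simp
qed

lemma UN_unique:
  assumes "unique_nearest C y x" "unique_nearest C y x'"
  shows "x = x'"
  using assms unfolding unique_nearest_def by (metis less_asym)

lemma near_interior:
  fixes C :: "'a::euclidean_space set"
  assumes xC: "x \<in> C" and nz: "dist (x + q *\<^sub>R u) x \<le> infdist (x + q *\<^sub>R u) C"
    and q': "0 \<le> q'" "q' < q"
  shows "unique_nearest C (x + q' *\<^sub>R u) x"
  unfolding unique_nearest_def
proof (intro conjI ballI impI xC)
  fix w assume wC: "w \<in> C" and wx: "w \<noteq> x"
  define y where "y = x + q' *\<^sub>R u"
  define z where "z = x + q *\<^sub>R u"
  show "dist (x + q' *\<^sub>R u) x < dist (x + q' *\<^sub>R u) w"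
  proof (rule ccontr)
    assume "\<not> ?thesis"
    hence le: "dist y w \<le> q' * norm u" using q' by (simp add: y_def dist_norm)
    have zx: "dist z x = q * norm u" using q' by (simp add: z_def dist_norm)
    have "q * norm u \<le> dist z w" using nz infdist_le[OF wC, of z] zx unfolding z_def by linarith
    moreover have "dist z w \<le> dist z y + dist y w" by (rule dist_triangle)
    moreover have zyv: "z - y = (q - q') *\<^sub>R u" by (simp add: z_def y_def algebra_simps)
    moreover have zy: "dist z y = (q - q') * norm u"
      using zyv q' by (simp add: dist_norm)
    ultimately have eq1: "dist y w = q' * norm u" and eq2: "dist z w = dist z y + dist y w"
      using le by (auto simp: algebra_simps)
    show False
    proof (cases "u = 0")
      case True
      then show ?thesis using eq1 wx by (simp add: y_def)
    next
      case False
      have "norm ((z - y) + (y - w)) = norm (z - y) + norm (y - w)"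
        using eq2 by (simp add: dist_norm)
      hence "norm (z - y) *\<^sub>R (y - w) = norm (y - w) *\<^sub>R (z - y)"
        by (rule norm_triangle_eq[THEN iffD1])
      hence "((q - q') * norm u) *\<^sub>R (y - w) = (q' * norm u) *\<^sub>R ((q - q') *\<^sub>R u)"
        using zy eq1 zyv by (metis dist_norm)
      hence "((q - q') * norm u) *\<^sub>R (y - w) = ((q - q') * norm u) *\<^sub>R (q' *\<^sub>R u)"
        by (simp add: algebra_simps)
      moreover have "(q - q') * norm u \<noteq> 0" using False q' by simp
      ultimately have "y - w = q' *\<^sub>R u" by (metis scaleR_cancel_left)
      hence "w = x" by (simp add: y_def algebra_simps)
      thus False using wx by simp
    qed
  qed
qed

lemma UN_mono:
  fixes C :: "'a::euclidean_space set"
  assumes "unique_nearest C (x + t' *\<^sub>R u) x" "0 \<le> t" "t \<le> t'"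
  shows "unique_nearest C (x + t *\<^sub>R u) x"
proof (cases "t = t'")
  case True then show ?thesis using assms by simp
next
  case False
  have xC: "x \<in> C" using assms unfolding unique_nearest_def by auto
  show ?thesis
    by (rule near_interior[where q=t', OF xC _ assms(2)]) (use assms False UN_dist[OF assms(1)] in auto)
qed

lemma lt_reach:
  "ereal t < local_reach C x u \<longleftrightarrow> (\<exists>t'>t. 0 \<le> t' \<and> unique_nearest C (x + t' *\<^sub>R u) x)"
  unfolding local_reach_def by (auto simp: less_SUP_iff)

lemma proj_eq:
  assumes "unique_nearest C y x"
  shows "proj C y = x"
  unfolding proj_def using assms UN_unique by blast

lemma normal_bundleD:
  fixes C :: "'a::euclidean_space set"
  assumes "closed C" "C \<noteq> {}" "(x, u) \<in> normal_bundle C"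
  shows "x \<in> C" "norm u = 1" "ereal 0 < local_reach C x u"
    "\<And>t. 0 < t \<Longrightarrow> ereal t < local_reach C x u \<Longrightarrow>
         unique_nearest C (x + t *\<^sub>R u) x \<and> infdist (x + t *\<^sub>R u) C = t"
proof -
  obtain y where yU: "y \<in> Unp C" and xe: "x = proj C y" and ue: "u = (1 / infdist y C) *\<^sub>R (y - proj C y)"
    using assms(3) unfolding normal_bundle_def by auto
  obtain x0 where UN0: "unique_nearest C y x0" and yC: "y \<notin> C" using yU unfolding Unp_def by auto
  have xx0: "x = x0" using xe proj_eq[OF UN0] by simp
  have x0C: "x0 \<in> C" using UN0 unfolding unique_nearest_def by auto
  have D: "infdist y C = dist y x0" by (rule UN_dist[OF UN0])
  have Dpos: "infdist y C > 0" using infdist_pos_not_in_closed[OF assms(1,2) yC] .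
  show "x \<in> C" using xx0 x0C by simp
  have uu: "u = (1 / dist y x0) *\<^sub>R (y - x0)" using ue xe xx0 D by simp
  show nu: "norm u = 1" using uu Dpos D by (simp add: dist_norm)
  have yeq: "y = x + dist y x0 *\<^sub>R u" using uu Dpos D xx0 by simp
  show "ereal 0 < local_reach C x u"
    unfolding lt_reach using Dpos D UN0 yeq xx0 by (intro exI[of _ "dist y x0"]) auto
  fix t assume t: "0 < t" "ereal t < local_reach C x u"
  then obtain t' where "t' > t" "0 \<le> t'" "unique_nearest C (x + t' *\<^sub>R u) x"
    unfolding lt_reach by auto
  hence UNt: "unique_nearest C (x + t *\<^sub>R u) x" using UN_mono[of C x t' u t] t by auto
  moreover have "infdist (x + t *\<^sub>R u) C = t"
    using UN_dist[OF UNt] t nu by (simp add: dist_norm)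
  ultimately show "unique_nearest C (x + t *\<^sub>R u) x \<and> infdist (x + t *\<^sub>R u) C = t" by simp
qed

lemma parset_closed: "closed (parset C c)"
  unfolding parset_def
  by (intro closed_Collect_le continuous_intros) 

lemma parset_compact:
  fixes C :: "'a::euclidean_space set"
  assumes "compact C" "C \<noteq> {}"
  shows "compact (parset C c)"
proof -
  have "parset C c \<subseteq> {x. infdist x C \<le> max c 0 + 1}" unfolding parset_def by auto
  moreover have "compact {x. infdist x C \<le> max c 0 + 1}"
    by (rule compact_infdist_le[OF assms(2,1)]) simp
  ultimately show ?thesis using parset_closed compact_Int_closed
    by (metis inf.absorb_iff2)
qed

lemma parset_sup:
  assumes "0 \<le> c"
  shows "C \<subseteq> parset C c"
  using assms unfolding parset_def by auto

lemma parset_zero: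
  fixes C :: "'a::euclidean_space set"
  assumes "closed C" "C \<noteq> {}"
  shows "parset C 0 = C"
  unfolding parset_def using in_closed_iff_infdist_zero[OF assms] infdist_nonneg
  by (auto intro: antisym)

lemma infdist_ge:
  assumes "C \<noteq> {}" "\<And>z. z \<in> C \<Longrightarrow> d \<le> dist y z"
  shows "d \<le> infdist y C"
  unfolding infdist_def using assms by (auto intro!: cINF_greatest)

lemma segpt:
  fixes C :: "'a::euclidean_space set"
  assumes "x \<in> C" "dist y x = D" "0 \<le> c" "c \<le> D" "0 < D"
  shows "x + (c / D) *\<^sub>R (y - x) \<in> parset C c" "dist y (x + (c / D) *\<^sub>R (y - x)) = D - c"
proof -
  have "dist (x + (c / D) *\<^sub>R (y - x)) x = c"
    using assms by (simp add: dist_norm norm_minus_commute)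
  thus "x + (c / D) *\<^sub>R (y - x) \<in> parset C c" unfolding parset_def
    using infdist_le[OF assms(1), of "x + (c / D) *\<^sub>R (y - x)"] by (simp add: dist_commute)
  have "y - (x + (c / D) *\<^sub>R (y - x)) = (1 - c / D) *\<^sub>R (y - x)" by (simp add: algebra_simps)
  hence "dist y (x + (c / D) *\<^sub>R (y - x)) = \<bar>1 - c / D\<bar> * D"
    using assms by (simp add: dist_norm norm_minus_commute)
  also have "\<dots> = D - c" using assms by (simp add: field_simps)
  finally show "dist y (x + (c / D) *\<^sub>R (y - x)) = D - c" .
qed

lemma parset_infdist:
  fixes C :: "'a::euclidean_space set"
  assumes "compact C" "C \<noteq> {}" "0 \<le> c" "c \<le> infdist y C"
  shows "infdist y (parset C c) = infdist y C - c"
proof (rule antisym)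
  obtain x where xC: "x \<in> C" and dx: "infdist y C = dist y x"
    using infdist_attains_inf[OF compact_imp_closed[OF assms(1)] assms(2)] by blast
  show "infdist y (parset C c) \<le> infdist y C - c"
  proof (cases "infdist y C = 0")
    case True
    then have "y \<in> parset C c" using assms unfolding parset_def by simp
    then show ?thesis using True assms by simp
  next
    case False
    then have "0 < infdist y C" using infdist_nonneg[of y C] by simp
    then show ?thesis using segpt[OF xC dx[symmetric] assms(3)] assms dx
      by (metis infdist_le)
  qed
  have ne: "parset C c \<noteq> {}" using parset_sup[OF assms(3), of C] assms(2) by auto
  show "infdist y C - c \<le> infdist y (parset C c)"
  proof (rule infdist_ge[OF ne])
    fix z assume "z \<in> parset C c"
    then have "infdist z C \<le> c" unfolding parset_def by simp
    thus "infdist y C - c \<le> dist y z" using infdist_triangle[of y C z] by simp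
  qed
qed

lemma parset_parset:
  fixes C :: "'a::euclidean_space set"
  assumes "compact C" "C \<noteq> {}" "0 \<le> a" "0 \<le> b"
  shows "parset (parset C a) b = parset C (a + b)"
proof -
  have "infdist y (parset C a) \<le> b \<longleftrightarrow> infdist y C \<le> a + b" for y
  proof (cases "infdist y C \<le> a")
    case True
    then have "y \<in> parset C a" unfolding parset_def by simp
    then show ?thesis using True assms by simp
  next
    case False
    then show ?thesis using parset_infdist[OF assms(1,2,3), of y] by linarith
  qed
  thus ?thesis unfolding parset_def[of "parset C a"] by (auto simp: parset_def[of C])
qed

lemma aux_seg:
  fixes C :: "'a::euclidean_space set"
  assumes "compact C" "C \<noteq> {}" "0 \<le> c" "c < D" "infdist y C = D"
    and w: "w \<in> parset C c" "dist y w \<le> D - c"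
  shows "\<exists>x'\<in>C. dist y x' = D \<and> w = x' + (c / D) *\<^sub>R (y - x')"
proof -
  obtain x' where x'C: "x' \<in> C" and dx: "infdist w C = dist w x'"
    using infdist_attains_inf[OF compact_imp_closed[OF assms(1)] assms(2)] by blast
  have wx: "dist w x' \<le> c" using w(1) dx unfolding parset_def by simp
  have "D \<le> dist y x'" using infdist_le[OF x'C, of y] assms by simp
  moreover have "dist y x' \<le> dist y w + dist w x'" by (rule dist_triangle)
  ultimately have e1: "dist y w = D - c" and e2: "dist w x' = c" and e3: "dist y x' = D"
    using wx w(2) by linarith+
  have "norm ((y - w) + (w - x')) = norm (y - w) + norm (w - x')"
    using e1 e2 e3 by (simp add: dist_norm)
  hence "norm (y - w) *\<^sub>R (w - x') = norm (w - x') *\<^sub>R (y - w)"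
    by (rule norm_triangle_eq[THEN iffD1])
  hence "(D - c) *\<^sub>R (w - x') = c *\<^sub>R (y - w)" using e1 e2 by (simp add: dist_norm)
  hence "D *\<^sub>R w = D *\<^sub>R (x' + (c / D) *\<^sub>R (y - x'))"
    using assms by (simp add: algebra_simps)
  hence "w = x' + (c / D) *\<^sub>R (y - x')" using assms by simp
  thus ?thesis using x'C e3 by blast
qed

lemma par_UN:
  fixes C :: "'a::euclidean_space set"
  assumes C: "compact C" "C \<noteq> {}" and c: "0 \<le> c" "c < infdist y C"
  shows "unique_nearest (parset C c) y z \<longleftrightarrow>
         (\<exists>x. unique_nearest C y x \<and> z = x + (c / infdist y C) *\<^sub>R (y - x))"
proof -
  define D where "D = infdist y C"
  have Dpos: "0 < D" using c D_def by simp
  have ID: "infdist y (parset C c) = D - c" using parset_infdist[OF C c(1)] c D_def by simp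
  show ?thesis
  proof
    assume UN: "unique_nearest (parset C c) y z"
    obtain x where xC: "x \<in> C" and dx: "D = dist y x"
      using infdist_attains_inf[OF compact_imp_closed[OF C(1)] C(2)] D_def by blast
    note sp = segpt[OF xC dx[symmetric] c(1) _ Dpos]
    have dz: "dist y z = D - c" using UN_dist[OF UN] ID by simp
    have zz: "z = x + (c / D) *\<^sub>R (y - x)"
    proof (rule ccontr)
      assume "\<not> ?thesis"
      then have "dist y z < dist y (x + (c / D) *\<^sub>R (y - x))"
        using UN sp c D_def unfolding unique_nearest_def by auto
      thus False using sp dz c D_def by simp
    qed
    have "unique_nearest C y x"
      unfolding unique_nearest_def
    proof (intro conjI ballI impI xC)
      fix w assume wC: "w \<in> C" and wx: "w \<noteq> x"
      show "dist y x < dist y w"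
      proof (rule ccontr)
        assume "\<not> ?thesis"
        hence dw: "dist y w = D" using infdist_le[OF wC, of y] D_def dx by simp
        note sw = segpt[OF wC dw c(1) _ Dpos]
        have "w + (c / D) *\<^sub>R (y - w) = z"
        proof (rule ccontr)
          assume "\<not> ?thesis"
          then have "dist y z < dist y (w + (c / D) *\<^sub>R (y - w))"
            using UN sw c D_def unfolding unique_nearest_def by auto
          thus False using sw dz c D_def by simp
        qed
        hence "w + (c / D) *\<^sub>R (y - w) = x + (c / D) *\<^sub>R (y - x)" using zz by simp
        hence "(1 - c / D) *\<^sub>R w = (1 - c / D) *\<^sub>R x" by (simp add: algebra_simps)
        moreover have "1 - c / D \<noteq> 0" using c D_def by simp
        ultimately show False using wx by simp
      qed
    qed
    thus "\<exists>x. unique_nearest C y x \<and> z = x + (c / infdist y C) *\<^sub>R (y - x)"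
      using zz D_def by blast
  next
    assume "\<exists>x. unique_nearest C y x \<and> z = x + (c / infdist y C) *\<^sub>R (y - x)"
    then obtain x where UN: "unique_nearest C y x" and zz: "z = x + (c / D) *\<^sub>R (y - x)"
      using D_def by blast
    have xC: "x \<in> C" using UN unfolding unique_nearest_def by auto
    have dx: "dist y x = D" using UN_dist[OF UN] D_def by simp
    note sp = segpt[OF xC dx c(1) _ Dpos]
    show "unique_nearest (parset C c) y z"
      unfolding unique_nearest_def
    proof (intro conjI ballI impI)
      show "z \<in> parset C c" using sp zz c D_def by simp
      fix w assume wP: "w \<in> parset C c" and wz: "w \<noteq> z"
      show "dist y z < dist y w"
      proof (rule ccontr)
        assume "\<not> ?thesis"
        hence "dist y w \<le> D - c" using sp zz c D_def by simp
        then obtain x' where x'C: "x' \<in> C" and "dist y x' = D" and we: "w = x' + (c / D) *\<^sub>R (y - x')"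
          using aux_seg[OF C c(1) _ D_def[symmetric] wP] c D_def by blast
        then have "x' = x" using UN dx unfolding unique_nearest_def by force
        thus False using we zz wz by simp
      qed
    qed
  qed
qed

lemma reach_shift:
  fixes C :: "'a::euclidean_space set"
  assumes C: "compact C" "C \<noteq> {}" and c: "0 < c" and nu: "norm u = 1" and t: "0 \<le> t"
  shows "ereal t < local_reach (parset C c) (x + c *\<^sub>R u) u \<longleftrightarrow> ereal (t + c) < local_reach C x u"
  unfolding lt_reach
proof
  assume "\<exists>t'>t. 0 \<le> t' \<and> unique_nearest (parset C c) (x + c *\<^sub>R u + t' *\<^sub>R u) (x + c *\<^sub>R u)"
  then obtain t' where t': "t' > t" and UN: "unique_nearest (parset C c) (x + c *\<^sub>R u + t' *\<^sub>R u) (x + c *\<^sub>R u)"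
    by auto
  define y where "y = x + (c + t') *\<^sub>R u"
  have yy: "x + c *\<^sub>R u + t' *\<^sub>R u = y" by (simp add: y_def algebra_simps)
  have "y - (x + c *\<^sub>R u) = t' *\<^sub>R u" by (simp add: y_def algebra_simps)
  hence ip: "infdist y (parset C c) = t'" using UN_dist[OF UN] yy t' t nu by (simp add: dist_norm)
  have gt: "c < infdist y C"
  proof (rule ccontr)
    assume "\<not> ?thesis"
    then have "y \<in> parset C c" unfolding parset_def by simp
    then have "infdist y (parset C c) = 0" by simp
    thus False using ip t' t by simp
  qed
  have D: "infdist y C = c + t'" using parset_infdist[OF C _ , of c y] c gt ip by simp
  obtain x'' where UN'': "unique_nearest C y x''" and eq: "x + c *\<^sub>R u = x'' + (c / (c + t')) *\<^sub>R (y - x'')"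
    using par_UN[OF C _ gt, of "x + c *\<^sub>R u"] c UN yy D by auto
  have "y - (x + c *\<^sub>R u) = (1 - c / (c + t')) *\<^sub>R (y - x'')" using eq by (simp add: algebra_simps)
  moreover have "y - (x + c *\<^sub>R u) = t' *\<^sub>R u" by (simp add: y_def algebra_simps)
  moreover have "1 - c / (c + t') = t' / (c + t')" using c t t' by (simp add: field_simps)
  ultimately have "t' *\<^sub>R u = (t' / (c + t')) *\<^sub>R (y - x'')" by simp
  hence "(c + t') *\<^sub>R (t' *\<^sub>R u) = (c + t') *\<^sub>R ((t' / (c + t')) *\<^sub>R (y - x''))" by simp
  also have "\<dots> = ((c + t') * (t' / (c + t'))) *\<^sub>R (y - x'')" by simp
  also have "(c + t') * (t' / (c + t')) = t'" using c t t' by simp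
  finally have "(c + t') *\<^sub>R (t' *\<^sub>R u) = t' *\<^sub>R (y - x'')" .
  hence "t' *\<^sub>R ((c + t') *\<^sub>R u) = t' *\<^sub>R (y - x'')" by (simp add: algebra_simps)
  hence "(c + t') *\<^sub>R u = y - x''" using t t' by (metis scaleR_cancel_left less_le_trans less_irrefl)
  hence "x'' = x" by (simp add: y_def algebra_simps)
  thus "\<exists>t'>t + c. 0 \<le> t' \<and> unique_nearest C (x + t' *\<^sub>R u) x"
    using UN'' t' t c by (intro exI[of _ "c + t'"]) (auto simp: y_def)
next
  assume "\<exists>s'>t + c. 0 \<le> s' \<and> unique_nearest C (x + s' *\<^sub>R u) x"
  then obtain s' where s': "s' > t + c" and UN: "unique_nearest C (x + s' *\<^sub>R u) x" by auto
  define y where "y = x + s' *\<^sub>R u"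
  have D: "infdist y C = s'" using UN_dist[OF UN] s' t c nu by (simp add: y_def dist_norm)
  have "unique_nearest (parset C c) y (x + (c / s') *\<^sub>R (y - x))"
    using par_UN[OF C _ , of c y] c s' t D UN y_def by auto
  moreover have "x + (c / s') *\<^sub>R (y - x) = x + c *\<^sub>R u" using s' t c by (simp add: y_def)
  moreover have "y = x + c *\<^sub>R u + (s' - c) *\<^sub>R u" by (simp add: y_def algebra_simps)
  ultimately show "\<exists>t'>t. 0 \<le> t' \<and> unique_nearest (parset C c) (x + c *\<^sub>R u + t' *\<^sub>R u) (x + c *\<^sub>R u)"
    using s' t by (intro exI[of _ "s' - c"]) auto
qed

definition NC :: "'a::euclidean_space set \<Rightarrow> real \<Rightarrow> ('a \<times> 'a) set" where
  "NC C q = {p. fst p \<in> C \<and> dist (fst p + q *\<^sub>R snd p) (fst p) \<le> infdist (fst p + q *\<^sub>R snd p) C}"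

definition rs :: "'a::euclidean_space set \<Rightarrow> real \<Rightarrow> ('a \<times> 'a) set" where
  "rs C t = {p. ereal t < local_reach C (fst p) (snd p)}"

lemma rs_eq:
  fixes C :: "'a::euclidean_space set"
  assumes "0 \<le> t"
  shows "rs C t = (\<Union>q\<in>{q\<in>\<rat>. t < q}. NC C q)"
proof safe
  fix x u assume "(x, u) \<in> rs C t"
  then obtain t' where t': "t' > t" "0 \<le> t'" and UN: "unique_nearest C (x + t' *\<^sub>R u) x"
    unfolding rs_def lt_reach by auto
  obtain q where q: "q \<in> \<rat>" "t < q" "q < t'" using Rats_dense_in_real t'(1) by blast
  have "unique_nearest C (x + q *\<^sub>R u) x" using UN_mono[OF UN] q assms by auto
  hence "(x, u) \<in> NC C q" unfolding NC_def using UN_dist unique_nearest_def by fastforce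
  thus "(x, u) \<in> (\<Union>q\<in>{q\<in>\<rat>. t < q}. NC C q)" using q by auto
next
  fix x u q assume q: "q \<in> \<rat>" "t < q" and N: "(x, u) \<in> NC C q"
  have "unique_nearest C (x + ((t + q) / 2) *\<^sub>R u) x"
    using N q assms unfolding NC_def by (intro near_interior[where q=q]) auto
  thus "(x, u) \<in> rs C t" unfolding rs_def lt_reach using q assms
    by (intro CollectI exI[of _ "(t + q) / 2"]) auto
qed

lemma NC_closed:
  fixes C :: "'a::euclidean_space set"
  assumes "closed C"
  shows "closed (NC C q)"
proof -
  have "NC C q = (C \<times> UNIV) \<inter> {p. dist (fst p + q *\<^sub>R snd p) (fst p) \<le> infdist (fst p + q *\<^sub>R snd p) C}"
    unfolding NC_def by auto
  also have "closed \<dots>"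
    by (intro closed_Int closed_Times assms closed_UNIV closed_Collect_le continuous_intros)
  finally show ?thesis .
qed

lemma rs_borel:
  fixes C :: "'a::euclidean_space set"
  assumes "closed C" "0 \<le> t"
  shows "rs C t \<in> sets borel"
  unfolding rs_eq[OF assms(2)]
  by (intro sets.countable_UN'' borel_closed NC_closed assms countable_Collect countable_rat)

definition Kset :: "'a::euclidean_space set \<Rightarrow> real \<Rightarrow> ('a \<times> 'a) set" where
  "Kset C q = {p. snd p \<in> C \<and> q \<le> infdist (fst p) C \<and> dist (fst p) (snd p) \<le> q}"

definition Seg :: "'a::euclidean_space set \<Rightarrow> real \<Rightarrow> 'a set" where
  "Seg C q = (\<lambda>(l, p). snd p + l *\<^sub>R (fst p - snd p)) ` ({0..1} \<times> Kset C q)"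

definition SS :: "'a::euclidean_space set \<Rightarrow> real \<Rightarrow> 'a set" where
  "SS C b = (\<Union>q\<in>{q\<in>\<rat>. b < q}. Seg C q)"

lemma Kset_compact:
  fixes C :: "'a::euclidean_space set"
  assumes "compact C" "C \<noteq> {}"
  shows "compact (Kset C q)"
proof -
  have "Kset C q = (parset C q \<times> C) \<inter> {p. q \<le> infdist (fst p) C} \<inter> {p. dist (fst p) (snd p) \<le> q}"
    unfolding Kset_def parset_def
    by (auto intro: order_trans[OF infdist_le])
  also have "compact \<dots>"
    by (intro compact_Int_closed compact_Times parset_compact assms closed_Collect_le continuous_intros)
  finally show ?thesis .
qed

lemma Seg_closed:
  fixes C :: "'a::euclidean_space set"
  assumes "compact C" "C \<noteq> {}"
  shows "closed (Seg C q)"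
  unfolding Seg_def
  by (intro compact_imp_closed compact_continuous_image compact_Times compact_Icc Kset_compact assms)
     (auto intro!: continuous_intros simp: case_prod_unfold)

lemma SS_borel:
  fixes C :: "'a::euclidean_space set"
  assumes "compact C" "C \<noteq> {}"
  shows "SS C b \<in> sets borel"
  unfolding SS_def
  by (intro sets.countable_UN'' borel_closed Seg_closed assms countable_Collect countable_rat)

lemma SS_iff:
  fixes C :: "'a::euclidean_space set"
  assumes C: "compact C" "C \<noteq> {}" and nu: "norm u = 1" and t: "0 < t" "t < b"
    and UN: "unique_nearest C (x + t *\<^sub>R u) x"
  shows "x + t *\<^sub>R u \<in> SS C b \<longleftrightarrow> ereal b < local_reach C x u"
proof
  assume "ereal b < local_reach C x u"
  then obtain t' where t': "t' > b" and UN': "unique_nearest C (x + t' *\<^sub>R u) x"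
    unfolding lt_reach by auto
  obtain q where q: "q \<in> \<rat>" "b < q" "q < t'" using Rats_dense_in_real t'(1) by blast
  have UNq: "unique_nearest C (x + q *\<^sub>R u) x" using UN_mono[OF UN'] q t by auto
  have xC: "x \<in> C" using UN unfolding unique_nearest_def by auto
  have iq: "infdist (x + q *\<^sub>R u) C = q" using UN_dist[OF UNq] nu q t by (simp add: dist_norm)
  have K: "(x + q *\<^sub>R u, x) \<in> Kset C q" unfolding Kset_def using xC iq nu q t by (simp add: dist_norm)
  have "x + t *\<^sub>R u = x + (t / q) *\<^sub>R ((x + q *\<^sub>R u) - x)" using q t by simp
  moreover have "t / q \<in> {0..1}" using q t by auto
  ultimately have "x + t *\<^sub>R u \<in> Seg C q" unfolding Seg_def using K
    by (intro image_eqI[where x="(t / q, (x + q *\<^sub>R u, x))"]) auto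
  thus "x + t *\<^sub>R u \<in> SS C b" unfolding SS_def using q by auto
next
  assume "x + t *\<^sub>R u \<in> SS C b"
  then obtain q l z x' where q: "q \<in> \<rat>" "b < q" and l: "0 \<le> l" "l \<le> 1"
    and K: "(z, x') \<in> Kset C q" and ye: "x + t *\<^sub>R u = x' + l *\<^sub>R (z - x')"
    unfolding SS_def Seg_def by auto
  define y where "y = x + t *\<^sub>R u"
  have x'C: "x' \<in> C" and qz: "q \<le> infdist z C" and zx': "dist z x' \<le> q" using K unfolding Kset_def by auto
  have dzx': "dist z x' = q" using qz zx' infdist_le[OF x'C, of z] by simp
  have dyx': "dist y x' = l * q"
    using ye dzx' l by (simp add: y_def dist_norm norm_minus_commute)
  have dzy: "dist z y = (1 - l) * q"
  proof -
    have "z - y = (1 - l) *\<^sub>R (z - x')" using ye by (simp add: y_def algebra_simps)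
    thus ?thesis using dzx' l by (simp add: dist_norm)
  qed
  have xC: "x \<in> C" using UN unfolding unique_nearest_def by auto
  have iy: "infdist y C = t" using UN_dist[OF UN] nu t by (simp add: y_def dist_norm)
  have "t \<le> l * q" using infdist_le[OF x'C, of y] iy dyx' by simp
  moreover have "q \<le> (1 - l) * q + t"
    using qz infdist_le[OF xC, of z] dist_triangle[of z x y] dzy iy UN_dist[OF UN]
    by (simp add: y_def)
  ultimately have tlq: "t = l * q" by (simp add: algebra_simps)
  have "x' = x"
  proof (rule ccontr)
    assume "x' \<noteq> x"
    then have "dist y x < dist y x'" using UN x'C unfolding unique_nearest_def y_def by auto
    thus False using UN_dist[OF UN] iy dyx' tlq by (simp add: y_def)
  qed
  have lpos: "0 < l" using tlq t l(1) by (cases "l = 0") auto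
  have "t *\<^sub>R u = l *\<^sub>R (z - x)" using ye \<open>x' = x\<close> by simp
  hence "(1 / l) *\<^sub>R (t *\<^sub>R u) = (1 / l) *\<^sub>R (l *\<^sub>R (z - x))" by simp
  hence "z - x = (t / l) *\<^sub>R u" using lpos by simp
  hence ze: "z = x + q *\<^sub>R u" using tlq lpos by (simp add: algebra_simps)
  have "unique_nearest C (x + ((b + q) / 2) *\<^sub>R u) x"
    using near_interior[OF xC, of q u "(b + q) / 2"] ze dzx' qz q t \<open>x' = x\<close> by auto
  thus "ereal b < local_reach C x u" unfolding lt_reach using q t
    by (intro exI[of _ "(b + q) / 2"]) auto
qed

definition smeas :: "('a::euclidean_space \<times> 'a) measure \<times> ('a \<times> 'a) measure \<Rightarrow> ('a \<times> 'a) set \<Rightarrow> real" where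
  "smeas m S = measure (fst m) S - measure (snd m) S"

lemma integral_eval_AE:
  fixes F :: "'b::topological_space \<Rightarrow> real"
  assumes "sets M = sets borel" "AE p in M. p \<in> N" "F \<in> borel_measurable borel" "S \<in> sets borel"
    "\<forall>p\<in>N. F p = c * indicator S p"
  shows "integral\<^sup>L M F = c * measure M S"
proof -
  have sp: "space M = UNIV" using sets_eq_imp_space_eq[OF assms(1)] by simp
  have "integral\<^sup>L M F = integral\<^sup>L M (\<lambda>p. c * indicator S p)"
  proof (rule integral_cong_AE)
    show "F \<in> borel_measurable M" using assms(3) measurable_cong_sets[OF assms(1) refl] by blast
    have "(\<lambda>p. c * indicator S p) \<in> borel_measurable borel"
      using assms(4) by (intro borel_measurable_times borel_measurable_const borel_measurable_indicator)
    thus "(\<lambda>p. c * indicator S p) \<in> borel_measurable M"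
      using measurable_cong_sets[OF assms(1) refl] by blast
    show "AE p in M. F p = c * indicator S p" using assms(2) by eventually_elim (use assms(5) in auto)
  qed
  also have "\<dots> = c * measure M S" using sp by simp
  finally show ?thesis .
qed

lemma sint_eval:
  assumes "signed_on N m" "F \<in> borel_measurable borel" "S \<in> sets borel"
    "\<forall>p\<in>N. F p = c * indicator S p"
  shows "sint m F = c * smeas m S"
proof -
  have s: "sets (fst m) = sets borel" "sets (snd m) = sets borel" "AE p in fst m. p \<in> N" "AE p in snd m. p \<in> N"
    using assms(1) unfolding signed_on_def by auto
  have "integral\<^sup>L (fst m) F = c * measure (fst m) S" by (rule integral_eval_AE[OF s(1) s(3) assms(2-4)])
  moreover have "integral\<^sup>L (snd m) F = c * measure (snd m) S" by (rule integral_eval_AE[OF s(2) s(4) assms(2-4)])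
  ultimately show ?thesis unfolding sint_def smeas_def by (simp add: algebra_simps)
qed

lemma integrand_meas:
  fixes C :: "'a::euclidean_space set" and f :: "'a \<Rightarrow> real"
  assumes "closed C" "0 \<le> t" "f \<in> borel_measurable borel"
  shows "(\<lambda>(x, u). t ^ k * (if ereal t < local_reach C x u then 1 else 0) * f (x + t *\<^sub>R u))
          \<in> borel_measurable borel"
proof -
  have e: "(\<lambda>(x, u). t ^ k * (if ereal t < local_reach C x u then 1 else 0) * f (x + t *\<^sub>R u))
     = (\<lambda>p. t ^ k * indicator (rs C t) p * f (fst p + t *\<^sub>R snd p))"
    by (auto simp: rs_def fun_eq_iff split: split_indicator)
  have rsb: "rs C t \<in> sets borel" using rs_borel assms by blast
  have cb: "(\<lambda>p. fst p + t *\<^sub>R snd p :: 'a) \<in> borel_measurable borel"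
    by (intro borel_measurable_continuous_onI continuous_intros)
  have m1: "(\<lambda>p. t ^ k * indicator (rs C t) p) \<in> borel_measurable (borel :: ('a \<times> 'a) measure)"
    by (rule borel_measurable_times[OF borel_measurable_const borel_measurable_indicator[OF rsb]])
  have m2: "(\<lambda>p. f (fst p + t *\<^sub>R snd p)) \<in> borel_measurable (borel :: ('a \<times> 'a) measure)"
    by (rule measurable_compose[OF cb assms(3)])
  show ?thesis unfolding e by (rule borel_measurable_times[OF m1 m2])
qed

lemma steiner_apply:
  fixes C :: "'a::euclidean_space set" and f :: "'a \<Rightarrow> real"
    and c :: "nat \<Rightarrow> real \<Rightarrow> real" and S :: "nat \<Rightarrow> real \<Rightarrow> ('a \<times> 'a) set"
  assumes SM: "support_measures C mu" and C: "closed C"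
    and f: "f \<in> borel_measurable borel" "bounded (range f)" "bounded {x. f x \<noteq> 0}"
    and S: "\<And>i t. i < DIM('a) \<Longrightarrow> 0 \<le> t \<Longrightarrow> S i t \<in> sets borel"
    and ev: "\<And>i t x u. i < DIM('a) \<Longrightarrow> 0 \<le> t \<Longrightarrow> (x, u) \<in> normal_bundle C \<Longrightarrow>
         t ^ (DIM('a) - i - 1) * (if ereal t < local_reach C x u then 1 else 0) * f (x + t *\<^sub>R u)
           = c i t * indicator (S i t) (x, u)"
  shows "(\<integral>y. indicator (UNIV - C) y * f y \<partial>lborel) =
         (\<Sum>i<DIM('a). omega (DIM('a) - i) * (LINT t:{0..}|lborel. c i t * smeas (mu i) (S i t)))"
proof -
  have "(\<integral>y. indicator (UNIV - C) y * f y \<partial>lborel) =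
        (\<Sum>i<DIM('a). omega (DIM('a) - i) *
           (LINT t:{0..}|lborel. sint (mu i) (\<lambda>(x,u). t ^ (DIM('a) - i - 1) *
               (if ereal t < local_reach C x u then 1 else 0) * f (x + t *\<^sub>R u))))"
    using conjunct2[OF conjunct2[OF SM[unfolded support_measures_def]], rule_format, OF conjI[OF f(1) conjI[OF f(2) f(3)]]] .
  also have "\<dots> = (\<Sum>i<DIM('a). omega (DIM('a) - i) * (LINT t:{0..}|lborel. c i t * smeas (mu i) (S i t)))"
  proof (rule sum.cong[OF refl])
    fix i assume i: "i \<in> {..<DIM('a)}"
    have sg: "signed_on (normal_bundle C) (mu i)" using SM i unfolding support_measures_def by auto
    have "(LINT t:{0..}|lborel. sint (mu i) (\<lambda>(x,u). t ^ (DIM('a) - i - 1) *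
               (if ereal t < local_reach C x u then 1 else 0) * f (x + t *\<^sub>R u)))
          = (LINT t:{0..}|lborel. c i t * smeas (mu i) (S i t))"
    proof (rule set_lebesgue_integral_cong)
      show "{0::real..} \<in> sets lborel" by simp
      show "\<forall>t. t \<in> {0..} \<longrightarrow> sint (mu i) (\<lambda>(x,u). t ^ (DIM('a) - i - 1) *
               (if ereal t < local_reach C x u then 1 else 0) * f (x + t *\<^sub>R u)) = c i t * smeas (mu i) (S i t)"
      proof (intro allI impI)
        fix t :: real assume t: "t \<in> {0..}"
        have t0: "0 \<le> t" using t by simp
        have ii: "i < DIM('a)" using i by simp
        have m: "(\<lambda>(x,u). t ^ (DIM('a) - i - 1) *
               (if ereal t < local_reach C x u then 1 else 0) * f (x + t *\<^sub>R u)) \<in> borel_measurable borel"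
          by (rule integrand_meas[OF C t0 f(1)])
        have ev': "\<forall>p\<in>normal_bundle C. (\<lambda>(x,u). t ^ (DIM('a) - i - 1) *
               (if ereal t < local_reach C x u then 1 else 0) * f (x + t *\<^sub>R u)) p = c i t * indicator (S i t) p"
        proof
          fix p assume p: "p \<in> normal_bundle C"
          obtain x u where pe: "p = (x, u)" by (cases p)
          show "(\<lambda>(x,u). t ^ (DIM('a) - i - 1) *
               (if ereal t < local_reach C x u then 1 else 0) * f (x + t *\<^sub>R u)) p = c i t * indicator (S i t) p"
            unfolding pe using ev[OF ii t0, of x u] p pe by simp
        qed
        show "sint (mu i) (\<lambda>(x,u). t ^ (DIM('a) - i - 1) *
               (if ereal t < local_reach C x u then 1 else 0) * f (x + t *\<^sub>R u)) = c i t * smeas (mu i) (S i t)"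
          by (rule sint_eval[OF sg m S[OF ii t0] ev'])
      qed
    qed
    thus "omega (DIM('a) - i) * (LINT t:{0..}|lborel. sint (mu i) (\<lambda>(x,u). t ^ (DIM('a) - i - 1) *
               (if ereal t < local_reach C x u then 1 else 0) * f (x + t *\<^sub>R u)))
          = omega (DIM('a) - i) * (LINT t:{0..}|lborel. c i t * smeas (mu i) (S i t))" by simp
  qed
  finally show ?thesis .
qed

lemma poly_int:
  fixes a b M :: real
  assumes "0 \<le> a" "a \<le> b" "1 \<le> n"
  shows "(LINT t:{0..}|lborel. t ^ (n - 1) * indicator {a<..b} t * M) = M * (b ^ n - a ^ n) / n"
proof -
  have "(LINT t:{0..}|lborel. t ^ (n - 1) * indicator {a<..b} t * M) = (LINT t:{a<..b}|lborel. M * t ^ (n - 1))"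
    unfolding set_lebesgue_integral_def using assms
    by (intro Bochner_Integration.integral_cong refl) (auto split: split_indicator)
  also have "\<dots> = (LBINT t=a..b. M * t ^ (n - 1))" by (rule interval_integral_Ioc[OF assms(2), symmetric])
  also have "\<dots> = M * b ^ n / n - M * a ^ n / n"
  proof (rule interval_integral_FTC_finite)
    show "continuous_on {min a b..max a b} (\<lambda>t. M * t ^ (n - 1))" by (intro continuous_intros)
    fix x show "((\<lambda>t. M * t ^ n / n) has_vector_derivative M * x ^ (n - 1)) (at x within {min a b..max a b})"
      unfolding has_real_derivative_iff_has_vector_derivative[symmetric]
    proof (rule DERIV_subset)
      show "((\<lambda>t. M * t ^ n / n) has_real_derivative M * x ^ (n - 1)) (at x)"
        using assms by (auto intro!: derivative_eq_intros)
    qed simp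
  qed
  finally have X: "(LINT t:{0..}|lborel. t ^ (n - 1) * indicator {a<..b} t * M) = M * b ^ n / n - M * a ^ n / n" .
  have "M * (b ^ n - a ^ n) / n = M * b ^ n / n - M * a ^ n / n" by (simp add: right_diff_distrib diff_divide_distrib)
  then show ?thesis using X by linarith
qed

lemma parset_ne:
  fixes A :: "'a::euclidean_space set"
  assumes "A \<noteq> {}" "0 \<le> r" shows "parset A r \<noteq> {}"
  using parset_sup[OF assms(2), of A] assms(1) by auto

lemma bounded_indicator_range: "bounded (range (indicator R :: 'a \<Rightarrow> real))"
proof -
  have "range (indicator R :: 'a \<Rightarrow> real) \<subseteq> {0, 1}" by (auto simp: indicator_def)
  thus ?thesis by (rule bounded_subset[OF finite_imp_bounded, rotated]) simp
qed

lemma rel1: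
  fixes A :: "'a::euclidean_space set"
  assumes A: "compact A" "A \<noteq> {}" and rr: "0 < \<rho>" "\<rho> < r"
    and SMr: "support_measures (parset A r) mur" and SMp: "support_measures (parset A \<rho>) mup"
    and ab: "0 < a" "a < b" "b < \<beta>"
  shows "(\<Sum>j<DIM('a). omega (DIM('a) - j) * (smeas (mur j) (rs (parset A r) \<beta>) * (b ^ (DIM('a) - j) - a ^ (DIM('a) - j)) / real (DIM('a) - j))) =
         (\<Sum>i<DIM('a). omega (DIM('a) - i) * (smeas (mup i) (rs (parset A \<rho>) (\<beta> + (r - \<rho>))) * ((b + (r - \<rho>)) ^ (DIM('a) - i) - (a + (r - \<rho>)) ^ (DIM('a) - i)) / real (DIM('a) - i)))"
proof -
  define C where "C = parset A r"
  define C' where "C' = parset A \<rho>"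
  define c where "c = r - \<rho>"
  have c0: "0 < c" using rr c_def by simp
  have CC: "C = parset C' c" using parset_parset[OF A, of \<rho> c] rr unfolding C_def C'_def c_def by simp
  have Cc: "compact C" "C \<noteq> {}" unfolding C_def using parset_compact[OF A] parset_ne[OF A(2)] rr by auto
  have C'c: "compact C'" "C' \<noteq> {}" unfolding C'_def using parset_compact[OF A] parset_ne[OF A(2)] rr by auto
  have C'C: "C' \<subseteq> C" unfolding CC using parset_sup[of c C'] c0 by auto
  define R where "R = ({y. a < infdist y C} \<inter> {y. infdist y C \<le> b}) \<inter> SS C \<beta>"
  define f where "f = (indicator R :: 'a \<Rightarrow> real)"
  have Rb: "R \<in> sets borel" unfolding R_def
    by (intro sets.Int borel_open borel_closed open_Collect_less closed_Collect_le continuous_intros SS_borel Cc)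
  have fm: "f \<in> borel_measurable borel" unfolding f_def by (rule borel_measurable_indicator[OF Rb])
  have fb: "bounded (range f)" unfolding f_def by (rule bounded_indicator_range)
  have "{x. f x \<noteq> 0} \<subseteq> parset C b" unfolding f_def R_def parset_def by (auto simp: indicator_def)
  hence fs: "bounded {x. f x \<noteq> 0}"
    using bounded_subset compact_imp_bounded parset_compact[OF Cc] by blast
  have fR: "f y = (if a < infdist y C \<and> infdist y C \<le> b \<and> y \<in> SS C \<beta> then 1 else 0)" for y
    unfolding f_def R_def by (auto simp: indicator_def)
  have fC: "f y = 0" if "y \<in> C" for y using that fR ab by simp
  have L1: "(\<integral>y. indicator (UNIV - C) y * f y \<partial>lborel) = integral\<^sup>L lborel f"
    by (rule Bochner_Integration.integral_cong) (auto simp: indicator_def fC)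
  have L2: "(\<integral>y. indicator (UNIV - C') y * f y \<partial>lborel) = integral\<^sup>L lborel f"
    by (rule Bochner_Integration.integral_cong) (use C'C fC in \<open>auto simp: indicator_def\<close>)
  have E1: "(\<integral>y. indicator (UNIV - C) y * f y \<partial>lborel) =
      (\<Sum>j<DIM('a). omega (DIM('a) - j) * (LINT t:{0..}|lborel. t ^ (DIM('a) - j - 1) * indicator {a<..b} t * smeas (mur j) (rs C \<beta>)))"
  proof (rule steiner_apply[OF SMr[folded C_def] compact_imp_closed[OF Cc(1)] fm fb fs])
    show "rs C \<beta> \<in> sets borel" using rs_borel[OF compact_imp_closed[OF Cc(1)]] ab by simp
    fix j and t :: real and x u assume j: "j < DIM('a)" and t: "0 \<le> t" and N: "(x, u) \<in> normal_bundle C"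
    note ND = normal_bundleD[OF compact_imp_closed[OF Cc(1)] Cc(2) N]
    show "t ^ (DIM('a) - j - 1) * (if ereal t < local_reach C x u then 1 else 0) * f (x + t *\<^sub>R u)
           = t ^ (DIM('a) - j - 1) * indicator {a<..b} t * indicator (rs C \<beta>) (x, u)"
    proof (cases "0 < t \<and> ereal t < local_reach C x u")
      case True
      then have UN: "unique_nearest C (x + t *\<^sub>R u) x" and it: "infdist (x + t *\<^sub>R u) C = t"
        using ND(4)[of t] by auto
      show ?thesis
      proof (cases "a < t \<and> t \<le> b")
        case True2: True
        have "x + t *\<^sub>R u \<in> SS C \<beta> \<longleftrightarrow> ereal \<beta> < local_reach C x u"
          by (rule SS_iff[OF Cc ND(2) _ _ UN]) (use True True2 ab in auto)
        hence "f (x + t *\<^sub>R u) = indicator (rs C \<beta>) (x, u)"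
          using True2 unfolding fR it by (simp add: indicator_def rs_def)
        moreover have "indicator {a<..b} t = (1::real)" using True2 by (simp add: indicator_def)
        moreover have "(if ereal t < local_reach C x u then 1 else 0) = (1::real)" using True by simp
        ultimately show ?thesis by simp
      next
        case False
        have "f (x + t *\<^sub>R u) = (if a < t \<and> t \<le> b \<and> x + t *\<^sub>R u \<in> SS C \<beta> then 1 else 0)"
          by (simp only: fR it)
        also have "\<dots> = 0" by (rule if_not_P) (use False in blast)
        finally have "f (x + t *\<^sub>R u) = 0" .
        moreover have "indicator {a<..b} t = (0::real)" using False by (simp add: indicator_def)
        ultimately show ?thesis by simp
      qed
    next
      case False
      show ?thesis
      proof (cases "t = 0")
        case True
        then show ?thesis using fC[OF ND(1)] ab by (simp add: indicator_def)
      next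
        case False2: False
        then have nl: "\<not> ereal t < local_reach C x u" using False t by simp
        have "\<not> (a < t \<and> t \<le> b \<and> (x, u) \<in> rs C \<beta>)"
        proof
          assume h: "a < t \<and> t \<le> b \<and> (x, u) \<in> rs C \<beta>"
          then have "ereal \<beta> < local_reach C x u" unfolding rs_def by simp
          moreover have "local_reach C x u \<le> ereal t" using nl by simp
          ultimately have "ereal \<beta> < ereal t" by (rule less_le_trans)
          hence "\<beta> < t" by simp
          thus False using h ab by simp
        qed
        then show ?thesis using nl by (auto simp: indicator_def)
      qed
    qed
  qed
  have E2: "(\<integral>y. indicator (UNIV - C') y * f y \<partial>lborel) =
      (\<Sum>i<DIM('a). omega (DIM('a) - i) * (LINT s:{0..}|lborel. s ^ (DIM('a) - i - 1) * indicator {a + c<..b + c} s * smeas (mup i) (rs C' (\<beta> + c))))"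
  proof (rule steiner_apply[OF SMp[folded C'_def] compact_imp_closed[OF C'c(1)] fm fb fs])
    show "rs C' (\<beta> + c) \<in> sets borel" using rs_borel[OF compact_imp_closed[OF C'c(1)]] ab c0 by simp
    fix i and s :: real and x u assume i: "i < DIM('a)" and s: "0 \<le> s" and N: "(x, u) \<in> normal_bundle C'"
    note ND = normal_bundleD[OF compact_imp_closed[OF C'c(1)] C'c(2) N]
    show "s ^ (DIM('a) - i - 1) * (if ereal s < local_reach C' x u then 1 else 0) * f (x + s *\<^sub>R u)
           = s ^ (DIM('a) - i - 1) * indicator {a + c<..b + c} s * indicator (rs C' (\<beta> + c)) (x, u)"
    proof (cases "0 < s \<and> ereal s < local_reach C' x u")
      case True
      define y where "y = x + s *\<^sub>R u"
      then have UN: "unique_nearest C' y x" and it: "infdist y C' = s"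
        using ND(4)[of s] True by auto
      show ?thesis
      proof (cases "s \<le> c")
        case True2: True
        then have "y \<in> C" unfolding CC parset_def using it by simp
        then show ?thesis using fC True2 ab unfolding y_def by (simp add: indicator_def)
      next
        case False2: False
        have UN2: "unique_nearest C y (x + c *\<^sub>R u)"
        proof -
          have "unique_nearest C y (x + (c / infdist y C') *\<^sub>R (y - x))"
            unfolding CC using par_UN[OF C'c _ , of c y] c0 it False2 UN by auto
          moreover have "x + (c / infdist y C') *\<^sub>R (y - x) = x + c *\<^sub>R u"
            using it True by (simp add: y_def)
          ultimately show ?thesis by simp
        qed
        have iC: "infdist y C = s - c" unfolding CC using parset_infdist[OF C'c, of c y] c0 it False2 by simp
        have ye: "y = (x + c *\<^sub>R u) + (s - c) *\<^sub>R u" by (simp add: y_def algebra_simps)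
        show ?thesis
        proof (cases "a < s - c \<and> s - c \<le> b")
          case True3: True
          have "y \<in> SS C \<beta> \<longleftrightarrow> ereal \<beta> < local_reach C (x + c *\<^sub>R u) u"
            using SS_iff[OF Cc ND(2), of "s - c" \<beta> "x + c *\<^sub>R u"] UN2 ye True3 ab by auto
          also have "\<dots> \<longleftrightarrow> ereal (\<beta> + c) < local_reach C' x u"
            unfolding CC using reach_shift[OF C'c c0 ND(2), of \<beta> x] ab by simp
          finally show ?thesis using True True3 iC fR[of y] unfolding y_def
            by (simp add: indicator_def rs_def)
        next
          case False3: False
          have "f y = (if a < s - c \<and> s - c \<le> b \<and> y \<in> SS C \<beta> then 1 else 0)"
            by (simp only: fR iC)
          also have "\<dots> = 0" by (rule if_not_P) (use False3 in blast)
          finally have "f y = 0" .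
          moreover have "indicator {a + c<..b + c} s = (0::real)" using False3 by (auto simp: indicator_def)
          ultimately show ?thesis unfolding y_def by simp
        qed
      qed
    next
      case False
      show ?thesis
      proof (cases "s = 0")
        case True
        then show ?thesis using fC C'C ND(1) ab c0 by (auto simp: indicator_def)
      next
        case False2: False
        then have nl: "\<not> ereal s < local_reach C' x u" using False s by simp
        have "\<not> (a + c < s \<and> s \<le> b + c \<and> (x, u) \<in> rs C' (\<beta> + c))"
        proof
          assume h: "a + c < s \<and> s \<le> b + c \<and> (x, u) \<in> rs C' (\<beta> + c)"
          then have "ereal (\<beta> + c) < local_reach C' x u" unfolding rs_def by simp
          moreover have "local_reach C' x u \<le> ereal s" using nl by simp
          ultimately have "ereal (\<beta> + c) < ereal s" by (rule less_le_trans)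
          hence "\<beta> + c < s" by simp
          thus False using h ab by simp
        qed
        then show ?thesis using nl by (auto simp: indicator_def)
      qed
    qed
  qed
  have P1: "(LINT t:{0..}|lborel. t ^ (DIM('a) - j - 1) * indicator {a<..b} t * smeas (mur j) (rs C \<beta>))
      = smeas (mur j) (rs C \<beta>) * (b ^ (DIM('a) - j) - a ^ (DIM('a) - j)) / real (DIM('a) - j)" if "j < DIM('a)" for j
    using poly_int[of a b "DIM('a) - j" "smeas (mur j) (rs C \<beta>)"] that ab by simp
  have P2: "(LINT s:{0..}|lborel. s ^ (DIM('a) - i - 1) * indicator {a + c<..b + c} s * smeas (mup i) (rs C' (\<beta> + c)))
      = smeas (mup i) (rs C' (\<beta> + c)) * ((b + c) ^ (DIM('a) - i) - (a + c) ^ (DIM('a) - i)) / real (DIM('a) - i)" if "i < DIM('a)" for i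
    using poly_int[of "a + c" "b + c" "DIM('a) - i" "smeas (mup i) (rs C' (\<beta> + c))"] that ab c0 by simp
  have "(\<Sum>j<DIM('a). omega (DIM('a) - j) * (smeas (mur j) (rs C \<beta>) * (b ^ (DIM('a) - j) - a ^ (DIM('a) - j)) / real (DIM('a) - j)))
      = (\<Sum>i<DIM('a). omega (DIM('a) - i) * (smeas (mup i) (rs C' (\<beta> + c)) * ((b + c) ^ (DIM('a) - i) - (a + c) ^ (DIM('a) - i)) / real (DIM('a) - i)))"
    using E1 E2 L1 L2 P1 P2 by simp
  thus ?thesis unfolding C_def C'_def c_def .
qed

lemma deriv_pow_div:
  fixes K c x :: real
  assumes "1 \<le> n"
  shows "((\<lambda>b. K * (b + c) ^ n / real n) has_real_derivative K * (x + c) ^ (n - 1)) (at x)"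
proof -
  have "((\<lambda>b. K * (b + c) ^ n / real n) has_real_derivative K * (real n * ((1 + 0) * (x + c) ^ (n - Suc 0))) / real n) (at x)"
    by (intro DERIV_cdivide DERIV_cmult DERIV_power DERIV_add DERIV_ident DERIV_const)
  thus ?thesis using assms by simp
qed

lemma poly_coeff:
  fixes M M' w :: "nat \<Rightarrow> real" and d :: nat
  assumes d: "1 \<le> d" and c: "0 < c" and \<beta>: "0 < \<beta>"
    and H: "\<And>a b. 0 < a \<Longrightarrow> a < b \<Longrightarrow> b < \<beta> \<Longrightarrow>
       (\<Sum>j<d. w j * (M j * (b ^ (d - j) - a ^ (d - j)) / real (d - j))) =
       (\<Sum>i<d. w i * (M' i * ((b + c) ^ (d - i) - (a + c) ^ (d - i)) / real (d - i)))"
  shows "w (d - 1) * M (d - 1) = (\<Sum>i<d. w i * M' i * c ^ (d - 1 - i))"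
proof -
  define P where "P b = (\<Sum>j<d. w j * M j * b ^ (d - j) / real (d - j)) - (\<Sum>i<d. w i * M' i * (b + c) ^ (d - i) / real (d - i))" for b
  define P' where "P' b = (\<Sum>j<d. w j * M j * b ^ (d - j - 1)) - (\<Sum>i<d. w i * M' i * (b + c) ^ (d - i - 1))" for b
  have Pc: "P b = P a" if "0 < a" "a < b" "b < \<beta>" for a b
  proof -
    have e1: "(\<Sum>j<d. w j * (M j * (b ^ (d - j) - a ^ (d - j)) / real (d - j))) =
       (\<Sum>j<d. w j * M j * b ^ (d - j) / real (d - j)) - (\<Sum>j<d. w j * M j * a ^ (d - j) / real (d - j))"
      unfolding sum_subtractf[symmetric] by (intro sum.cong refl) (simp add: algebra_simps diff_divide_distrib)
    have e2: "(\<Sum>i<d. w i * (M' i * ((b + c) ^ (d - i) - (a + c) ^ (d - i)) / real (d - i))) =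
       (\<Sum>i<d. w i * M' i * (b + c) ^ (d - i) / real (d - i)) - (\<Sum>i<d. w i * M' i * (a + c) ^ (d - i) / real (d - i))"
      unfolding sum_subtractf[symmetric] by (intro sum.cong refl) (simp add: algebra_simps diff_divide_distrib)
    show ?thesis using H[OF that] e1 e2 unfolding P_def by linarith
  qed
  have DP: "(P has_real_derivative P' x) (at x)" for x
  proof -
    have "((\<lambda>b. w j * M j * b ^ (d - j) / real (d - j)) has_real_derivative w j * M j * x ^ (d - j - 1)) (at x)"
      if "j < d" for j
      using deriv_pow_div[of "d - j" "w j * M j" 0 x] that by simp
    moreover have "((\<lambda>b. w i * M' i * (b + c) ^ (d - i) / real (d - i)) has_real_derivative w i * M' i * (x + c) ^ (d - i - 1)) (at x)"
      if "i < d" for i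
      using deriv_pow_div[of "d - i" "w i * M' i" c x] that by simp
    ultimately show ?thesis unfolding P_def[abs_def] P'_def
      by (intro DERIV_diff DERIV_sum) auto
  qed
  have P'0: "P' x = 0" if "0 < x" "x < \<beta>" for x
  proof (rule DERIV_local_const[OF DP])
    show "0 < min x (\<beta> - x)" using that by simp
    show "\<forall>y. \<bar>x - y\<bar> < min x (\<beta> - x) \<longrightarrow> P x = P y"
    proof (intro allI impI)
      fix y assume "\<bar>x - y\<bar> < min x (\<beta> - x)"
      hence y: "0 < y" "y < \<beta>" by auto
      show "P x = P y"
      proof (cases x y rule: linorder_cases)
        case less then show ?thesis using Pc[of x y] y that by simp
      next
        case equal then show ?thesis by simp
      next
        case greater then show ?thesis using Pc[of y x] y that by simp
      qed
    qed
  qed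
  have cont: "isCont P' 0" unfolding P'_def by (intro continuous_intros)
  have t1: "(P' \<longlongrightarrow> P' 0) (at_right 0)"
    using cont by (simp add: isCont_def filterlim_at_split)
  have "\<forall>\<^sub>F x in at_right 0. P' x = 0"
    unfolding eventually_at_right_field using \<beta> P'0 by (intro exI[of _ \<beta>]) auto
  hence t2: "(P' \<longlongrightarrow> 0) (at_right 0)" by (simp add: tendsto_eventually)
  have "P' 0 = 0" using tendsto_unique[OF trivial_limit_at_right_real t1 t2] .
  moreover have "(\<Sum>j<d. w j * M j * 0 ^ (d - j - 1)) = w (d - 1) * M (d - 1)"
  proof -
    have "(\<Sum>j<d. w j * M j * 0 ^ (d - j - 1)) = (\<Sum>j<d. if j = d - 1 then w j * M j else 0)"
      by (intro sum.cong refl) auto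
    also have "\<dots> = w (d - 1) * M (d - 1)" using d by (simp add: sum.delta)
    finally show ?thesis .
  qed
  moreover have "(\<Sum>i<d. w i * M' i * (0 + c) ^ (d - i - 1)) = (\<Sum>i<d. w i * M' i * c ^ (d - 1 - i))"
    by (intro sum.cong refl) (simp add: diff_commute)
  ultimately show ?thesis unfolding P'_def by simp
qed

lemma tv_cond:
  fixes C :: "'a::euclidean_space set"
  assumes SM: "support_measures C mu" "i < DIM('a)" "compact B" "0 < r"
  shows "tv_nn_int (mu i) (\<lambda>(x,u). indicator B x *
            ennreal (real_of_ereal (min (ereal r) (local_reach C x u)) ^ (DIM('a) - i))) < \<infinity>"
  using conjunct1[OF conjunct2[OF SM(1)[unfolded support_measures_def]], rule_format, OF SM(2) conjI[OF SM(3,4)]] .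

lemma signed_of:
  fixes C :: "'a::euclidean_space set"
  assumes "support_measures C mu" "i < DIM('a)"
  shows "signed_on (normal_bundle C) (mu i)"
  using conjunct1[OF assms(1)[unfolded support_measures_def], rule_format, OF assms(2)] .

lemma fin_rs_M:
  fixes C :: "'a::euclidean_space set" and M :: "('a \<times> 'a) measure"
  assumes C: "compact C" "C \<noteq> {}" and \<beta>: "0 < \<beta>" and sM: "sets M = sets borel"
    and AEN: "AE p in M. p \<in> normal_bundle C"
    and I: "(\<integral>\<^sup>+p. (\<lambda>(x,u). indicator C x *
            ennreal (real_of_ereal (min (ereal \<beta>) (local_reach C x u)) ^ k)) p \<partial>M) < \<infinity>"
  shows "emeasure M (rs C \<beta>) < \<infinity>"
proof -
  define S where "S = rs C \<beta> \<inter> (C \<times> UNIV)"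
  have rsb: "rs C \<beta> \<in> sets borel" using rs_borel[OF compact_imp_closed[OF C(1)]] \<beta> by simp
  have Sb: "S \<in> sets borel" unfolding S_def
    by (intro sets.Int rsb borel_closed closed_Times compact_imp_closed[OF C(1)] closed_UNIV)
  have "ennreal (\<beta> ^ k) * emeasure M S = (\<integral>\<^sup>+p. ennreal (\<beta> ^ k) * indicator S p \<partial>M)"
    using Sb sM by (simp add: nn_integral_cmult_indicator)
  also have "\<dots> \<le> (\<integral>\<^sup>+p. (\<lambda>(x,u). indicator C x *
            ennreal (real_of_ereal (min (ereal \<beta>) (local_reach C x u)) ^ k)) p \<partial>M)"
  proof (rule nn_integral_mono)
    fix p :: "'a \<times> 'a"
    obtain x u where pe: "p = (x, u)" by (cases p)
    show "ennreal (\<beta> ^ k) * indicator S p \<le> (\<lambda>(x,u). indicator C x *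
            ennreal (real_of_ereal (min (ereal \<beta>) (local_reach C x u)) ^ k)) p"
    proof (cases "p \<in> S")
      case True
      then have "x \<in> C" "ereal \<beta> < local_reach C x u" unfolding S_def rs_def pe by auto
      then have "min (ereal \<beta>) (local_reach C x u) = ereal \<beta>" by simp
      then show ?thesis using True \<open>x \<in> C\<close> pe by simp
    qed simp
  qed
  also have "\<dots> < \<infinity>" by (rule I)
  finally have "ennreal (\<beta> ^ k) * emeasure M S < \<infinity>" .
  hence "emeasure M S = 0 \<or> emeasure M S < \<infinity>" using \<beta> by (simp add: ennreal_mult_less_top top_unique)
  hence fS: "emeasure M S < \<infinity>" by auto
  have "emeasure M (rs C \<beta>) = emeasure M S"
  proof (rule emeasure_eq_AE)
    show "AE p in M. (p \<in> rs C \<beta>) = (p \<in> S)"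
      using AEN
    proof eventually_elim
      case (elim p)
      obtain x u where pe: "p = (x, u)" by (cases p)
      have "x \<in> C" using normal_bundleD(1)[OF compact_imp_closed[OF C(1)] C(2)] elim pe by blast
      thus ?case unfolding S_def pe by auto
    qed
    show "rs C \<beta> \<in> sets M" using rsb sM by simp
    show "S \<in> sets M" using Sb sM by simp
  qed
  thus ?thesis using fS by simp
qed

lemma fin_rs:
  fixes C :: "'a::euclidean_space set"
  assumes SM: "support_measures C mu" and C: "compact C" "C \<noteq> {}" and i: "i < DIM('a)" and \<beta>: "0 < \<beta>"
  shows "emeasure (fst (mu i)) (rs C \<beta>) < \<infinity>" "emeasure (snd (mu i)) (rs C \<beta>) < \<infinity>"
proof -
  have tv: "tv_nn_int (mu i) (\<lambda>(x,u). indicator C x *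
            ennreal (real_of_ereal (min (ereal \<beta>) (local_reach C x u)) ^ (DIM('a) - i))) < \<infinity>"
    by (rule tv_cond[OF SM i C(1) \<beta>])
  have sg: "signed_on (normal_bundle C) (mu i)" by (rule signed_of[OF SM i])
  show "emeasure (fst (mu i)) (rs C \<beta>) < \<infinity>"
    by (rule fin_rs_M[OF C \<beta>, of _ "DIM('a) - i"]) (use tv sg in \<open>auto simp: tv_nn_int_def signed_on_def\<close>)
  show "emeasure (snd (mu i)) (rs C \<beta>) < \<infinity>"
    by (rule fin_rs_M[OF C \<beta>, of _ "DIM('a) - i"]) (use tv sg in \<open>auto simp: tv_nn_int_def signed_on_def\<close>)
qed

lemma lim_rs:
  fixes C :: "'a::euclidean_space set" and M :: "('a \<times> 'a) measure"
  assumes sM: "sets M = sets borel" and C: "closed C" and t: "0 \<le> t"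
    and fin: "emeasure M (rs C t) < \<infinity>"
  shows "(\<lambda>n. measure M (rs C (inverse (real (Suc n)) + t))) \<longlonglongrightarrow> measure M (rs C t)"
proof -
  define A where "A n = rs C (inverse (real (Suc n)) + t)" for n
  have Ab: "range A \<subseteq> sets M" unfolding A_def using rs_borel[OF C] t sM
    by (auto intro!: rs_borel[OF C] simp: add_nonneg_nonneg)
  have inc: "incseq A"
  proof (rule incseq_SucI)
    fix n
    have "inverse (real (Suc (Suc n))) \<le> inverse (real (Suc n))" by (simp add: field_simps)
    then have le: "ereal (inverse (real (Suc (Suc n))) + t) \<le> ereal (inverse (real (Suc n)) + t)" by simp
    show "A n \<subseteq> A (Suc n)"
    proof
      fix p assume "p \<in> A n"
      then have "ereal (inverse (real (Suc n)) + t) < local_reach C (fst p) (snd p)" unfolding A_def rs_def by simp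
      then have "ereal (inverse (real (Suc (Suc n))) + t) < local_reach C (fst p) (snd p)" by (rule le_less_trans[OF le])
      thus "p \<in> A (Suc n)" unfolding A_def rs_def by simp
    qed
  qed
  have U: "(\<Union>n. A n) = rs C t"
  proof safe
    fix x u n assume "(x, u) \<in> A n"
    then have "ereal (inverse (real (Suc n)) + t) < local_reach C x u" unfolding A_def rs_def by simp
    moreover have "ereal t \<le> ereal (inverse (real (Suc n)) + t)" by simp
    ultimately have "ereal t < local_reach C x u" by (rule le_less_trans[rotated])
    thus "(x, u) \<in> rs C t" unfolding rs_def by simp
  next
    fix x u assume "(x, u) \<in> rs C t"
    then have lt: "ereal t < local_reach C x u" unfolding rs_def by simp
    show "(x, u) \<in> (\<Union>n. A n)"
    proof (cases "local_reach C x u")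
      case (real r)
      then have "0 < r - t" using lt by simp
      then obtain n where n: "inverse (real (Suc n)) < r - t" using reals_Archimedean by blast
      have "(x, u) \<in> A n" unfolding A_def rs_def using real n by simp
      thus ?thesis by blast
    next
      case PInf then show ?thesis unfolding A_def rs_def by auto
    next
      case MInf then show ?thesis using lt by simp
    qed
  qed
  have "(\<lambda>n. measure M (A n)) \<longlonglongrightarrow> measure M (\<Union>n. A n)"
    by (rule Lim_measure_incseq[OF Ab inc]) (use fin U in simp)
  thus ?thesis unfolding U unfolding A_def .
qed

lemma rel3:
  fixes A :: "'a::euclidean_space set"
  assumes A: "compact A" "A \<noteq> {}" and rr: "0 < \<rho>" "\<rho> < r"
    and SMr: "support_measures (parset A r) mur" and SMp: "support_measures (parset A \<rho>) mup"
    and fin: "emeasure (fst (mur (DIM('a) - 1))) UNIV < \<infinity>" "emeasure (snd (mur (DIM('a) - 1))) UNIV < \<infinity>"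
  shows "omega 1 * total_mass (mur (DIM('a) - 1)) =
    (\<Sum>i<DIM('a). omega (DIM('a) - i) * smeas (mup i) (rs (parset A \<rho>) (r - \<rho>)) * (r - \<rho>) ^ (DIM('a) - 1 - i))"
proof -
  define C where "C = parset A r"
  define C' where "C' = parset A \<rho>"
  define c where "c = r - \<rho>"
  define d where "d = DIM('a)"
  have d1: "1 \<le> d" unfolding d_def using DIM_positive by (simp add: Suc_le_eq)
  have c0: "0 < c" using rr c_def by simp
  have Cc: "compact C" "C \<noteq> {}" unfolding C_def using parset_compact[OF A] parset_ne[OF A(2)] rr by auto
  have C'c: "compact C'" "C' \<noteq> {}" unfolding C'_def using parset_compact[OF A] parset_ne[OF A(2)] rr by auto
  define \<beta> where "\<beta> n = inverse (real (Suc n))" for n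
  have \<beta>0: "0 < \<beta> n" for n unfolding \<beta>_def by simp
  have dd: "d - (d - 1) = 1" using d1 by simp
  have eqn: "omega 1 * smeas (mur (d - 1)) (rs C (\<beta> n + 0)) =
      (\<Sum>i<d. omega (d - i) * smeas (mup i) (rs C' (\<beta> n + c)) * c ^ (d - 1 - i))" for n
  proof -
    have "omega (d - (d - 1)) * smeas (mur (d - 1)) (rs C (\<beta> n)) =
      (\<Sum>i<d. omega (d - i) * smeas (mup i) (rs C' (\<beta> n + c)) * c ^ (d - 1 - i))"
    proof (rule poly_coeff[OF d1 c0 \<beta>0, where w="\<lambda>i. omega (d - i)"])
      fix a b assume "0 < a" "a < b" "b < \<beta> n"
      then show "(\<Sum>j<d. omega (d - j) * (smeas (mur j) (rs C (\<beta> n)) * (b ^ (d - j) - a ^ (d - j)) / real (d - j))) =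
       (\<Sum>i<d. omega (d - i) * (smeas (mup i) (rs C' (\<beta> n + c)) * ((b + c) ^ (d - i) - (a + c) ^ (d - i)) / real (d - i)))"
        using rel1[OF A rr SMr SMp, of a b "\<beta> n"] unfolding C_def C'_def c_def d_def by simp
    qed
    thus ?thesis using dd by simp
  qed
  have sg: "signed_on (normal_bundle C) (mur (d - 1))" using signed_of[OF SMr] d1 unfolding C_def d_def by simp
  have lim1: "(\<lambda>n. measure M (rs C (\<beta> n + 0))) \<longlonglongrightarrow> measure M UNIV"
    if sM: "sets M = sets borel" and AEN: "AE p in M. p \<in> normal_bundle C" and fM: "emeasure M UNIV < \<infinity>" for M
  proof -
    have sp: "space M = UNIV" using sets_eq_imp_space_eq[OF sM] by simp
    have "emeasure M (rs C 0) \<le> emeasure M UNIV"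
      by (rule emeasure_mono) (use sp sets.top[of M] in auto)
    hence "emeasure M (rs C 0) < \<infinity>" using fM by (rule le_less_trans)
    hence "(\<lambda>n. measure M (rs C (\<beta> n + 0))) \<longlonglongrightarrow> measure M (rs C 0)"
      unfolding \<beta>_def by (intro lim_rs[OF sM compact_imp_closed[OF Cc(1)]]) auto
    moreover have "measure M (rs C 0) = measure M UNIV"
    proof (rule measure_eq_AE)
      show "AE x in M. (x \<in> rs C 0) = (x \<in> UNIV)" using AEN
      proof eventually_elim
        case (elim p)
        obtain x u where pe: "p = (x, u)" by (cases p)
        show ?case using normal_bundleD(3)[OF compact_imp_closed[OF Cc(1)] Cc(2)] elim pe
          unfolding rs_def by auto
      qed
      show "rs C 0 \<in> sets M" using rs_borel[OF compact_imp_closed[OF Cc(1)]] sM by simp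
      show "UNIV \<in> sets M" using sp sets.top[of M] by simp
    qed
    ultimately show ?thesis by simp
  qed
  have L1: "(\<lambda>n. smeas (mur (d - 1)) (rs C (\<beta> n + 0))) \<longlonglongrightarrow> total_mass (mur (d - 1))"
  proof -
    have a: "sets (fst (mur (d - 1))) = sets borel" "AE p in fst (mur (d - 1)). p \<in> normal_bundle C"
      "sets (snd (mur (d - 1))) = sets borel" "AE p in snd (mur (d - 1)). p \<in> normal_bundle C"
      using sg unfolding signed_on_def by auto
    have f: "emeasure (fst (mur (d - 1))) UNIV < \<infinity>" "emeasure (snd (mur (d - 1))) UNIV < \<infinity>"
      using fin unfolding d_def by auto
    show ?thesis unfolding smeas_def total_mass_def
      by (rule tendsto_diff[OF lim1[OF a(1,2) f(1)] lim1[OF a(3,4) f(2)]])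
  qed
  have L2: "(\<lambda>n. smeas (mup i) (rs C' (\<beta> n + c))) \<longlonglongrightarrow> smeas (mup i) (rs C' c)" if i: "i < d" for i
  proof -
    have sgi: "signed_on (normal_bundle C') (mup i)" using signed_of[OF SMp] i unfolding C'_def d_def by simp
    have f1: "emeasure (fst (mup i)) (rs C' c) < \<infinity>" "emeasure (snd (mup i)) (rs C' c) < \<infinity>"
      using fin_rs[OF SMp[folded C'_def] C'c _ c0] i unfolding d_def by auto
    have a: "sets (fst (mup i)) = sets borel" "sets (snd (mup i)) = sets borel"
      using sgi unfolding signed_on_def by auto
    have c0': "0 \<le> c" using c0 by simp
    show ?thesis unfolding smeas_def \<beta>_def
      by (rule tendsto_diff[OF lim_rs[OF a(1) compact_imp_closed[OF C'c(1)] c0' f1(1)]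
                                 lim_rs[OF a(2) compact_imp_closed[OF C'c(1)] c0' f1(2)]])
  qed
  have "(\<lambda>n. omega 1 * smeas (mur (d - 1)) (rs C (\<beta> n + 0))) \<longlonglongrightarrow> omega 1 * total_mass (mur (d - 1))"
    by (intro tendsto_mult_left L1)
  moreover have "(\<lambda>n. omega 1 * smeas (mur (d - 1)) (rs C (\<beta> n + 0))) \<longlonglongrightarrow>
      (\<Sum>i<d. omega (d - i) * smeas (mup i) (rs C' c) * c ^ (d - 1 - i))"
      unfolding eqn by (intro tendsto_sum tendsto_mult_right tendsto_mult_left L2) simp
  ultimately have "omega 1 * total_mass (mur (d - 1)) = (\<Sum>i<d. omega (d - i) * smeas (mup i) (rs C' c) * c ^ (d - 1 - i))"
    by (rule LIMSEQ_unique)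
  thus ?thesis unfolding C'_def c_def d_def .
qed

lemma hM_props:
  fixes C :: "'a::euclidean_space set" and M :: "('a \<times> 'a) measure"
  assumes sM: "sets M = sets borel" and C: "closed C" and a: "0 < a" and fin: "emeasure M (rs C a) < \<infinity>"
  shows "(\<lambda>s. measure M (rs C (max s a))) \<in> borel_measurable borel"
    "\<And>s. 0 \<le> measure M (rs C (max s a))" "\<And>s. measure M (rs C (max s a)) \<le> measure M (rs C a)"
proof -
  have sub: "rs C (max s' a) \<subseteq> rs C (max s a)" if "s \<le> s'" for s s'
  proof
    fix p assume "p \<in> rs C (max s' a)"
    then have "ereal (max s' a) < local_reach C (fst p) (snd p)" unfolding rs_def by simp
    moreover have "max s a \<le> max s' a" using that by (simp add: max_def)
    hence "ereal (max s a) \<le> ereal (max s' a)" by (simp only: ereal_less_eq(3))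
    ultimately have "ereal (max s a) < local_reach C (fst p) (snd p)" by (rule le_less_trans[rotated])
    thus "p \<in> rs C (max s a)" unfolding rs_def by simp
  qed
  have inS: "rs C t \<in> sets M" if "0 \<le> t" for t using rs_borel[OF C that] sM by simp
  have fm: "rs C (max s a) \<in> fmeasurable M" for s
  proof -
    have "emeasure M (rs C (max s a)) \<le> emeasure M (rs C a)"
      by (rule emeasure_mono[OF sub[of a "max s a", simplified]]) (use inS a in auto)
    hence "emeasure M (rs C (max s a)) < \<infinity>" using fin by (rule le_less_trans)
    thus ?thesis using inS[of "max s a"] a by (auto simp: fmeasurable_def)
  qed
  have mono: "measure M (rs C (max s' a)) \<le> measure M (rs C (max s a))" if "s \<le> s'" for s s'
    by (rule measure_mono_fmeasurable[OF sub[OF that] _ fm]) (use inS a in auto)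
  have "mono (\<lambda>s. - measure M (rs C (max s a)))" unfolding mono_def using mono by simp
  hence "(\<lambda>s. - measure M (rs C (max s a))) \<in> borel_measurable borel" by (rule borel_measurable_mono)
  hence "(\<lambda>s. - (- measure M (rs C (max s a)))) \<in> borel_measurable borel" by (rule borel_measurable_uminus)
  thus "(\<lambda>s. measure M (rs C (max s a))) \<in> borel_measurable borel" by simp
  show "\<And>s. 0 \<le> measure M (rs C (max s a))" by simp
  show "\<And>s. measure M (rs C (max s a)) \<le> measure M (rs C a)"
    using mono[of a "max s a" for s] by simp
qed

lemma int_term:
  fixes C :: "'a::euclidean_space set"
  assumes SM: "support_measures C mu" and C: "compact C" "C \<noteq> {}" and i: "i < DIM('a)"
    and a: "0 < a" "a \<le> b"
  shows "integrable lborel (\<lambda>s. indicator {a<..b} s * (s ^ k * smeas (mu i) (rs C s)))"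
proof -
  have sg: "signed_on (normal_bundle C) (mu i)" by (rule signed_of[OF SM i])
  have s1: "sets (fst (mu i)) = sets borel" and s2: "sets (snd (mu i)) = sets borel"
    using sg unfolding signed_on_def by auto
  have f: "emeasure (fst (mu i)) (rs C a) < \<infinity>" "emeasure (snd (mu i)) (rs C a) < \<infinity>"
    using fin_rs[OF SM C i a(1)] by auto
  note h1 = hM_props[OF s1 compact_imp_closed[OF C(1)] a(1) f(1)]
  note h2 = hM_props[OF s2 compact_imp_closed[OF C(1)] a(1) f(2)]
  define \<phi> where "\<phi> s = s ^ k * (measure (fst (mu i)) (rs C (max s a)) - measure (snd (mu i)) (rs C (max s a)))" for s
  have \<phi>m: "\<phi> \<in> borel_measurable borel" unfolding \<phi>_def
    by (intro borel_measurable_times borel_measurable_diff h1(1) h2(1) borel_measurable_continuous_onI continuous_intros)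
  have "integrable lborel (\<lambda>s. indicator {a<..b} s *\<^sub>R \<phi> s)"
  proof (rule integrableI_bounded_set_indicator[where B="b ^ k * (measure (fst (mu i)) (rs C a) + measure (snd (mu i)) (rs C a))"])
    show "{a<..b} \<in> sets lborel" by simp
    show "\<phi> \<in> borel_measurable lborel" using \<phi>m by simp
    show "emeasure lborel {a<..b} < \<infinity>" using a by (simp add: emeasure_lborel_Ioc)
    show "AE x in lborel. x \<in> {a<..b} \<longrightarrow> norm (\<phi> x) \<le> b ^ k * (measure (fst (mu i)) (rs C a) + measure (snd (mu i)) (rs C a))"
    proof (rule AE_I2, rule impI)
      fix x assume x: "x \<in> {a<..b}"
      have "norm (\<phi> x) = x ^ k * \<bar>measure (fst (mu i)) (rs C (max x a)) - measure (snd (mu i)) (rs C (max x a))\<bar>"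
        unfolding \<phi>_def using x a by (simp add: abs_mult)
      also have "\<dots> \<le> b ^ k * (measure (fst (mu i)) (rs C a) + measure (snd (mu i)) (rs C a))"
      proof (rule mult_mono)
        show "x ^ k \<le> b ^ k" using x a by (intro power_mono) auto
        show "\<bar>measure (fst (mu i)) (rs C (max x a)) - measure (snd (mu i)) (rs C (max x a))\<bar>
              \<le> measure (fst (mu i)) (rs C a) + measure (snd (mu i)) (rs C a)"
          using h1(2)[of x] h1(3)[of x] h2(2)[of x] h2(3)[of x] by linarith
        show "0 \<le> b ^ k" using a by simp
        show "0 \<le> \<bar>measure (fst (mu i)) (rs C (max x a)) - measure (snd (mu i)) (rs C (max x a))\<bar>" by simp
      qed
      finally show "norm (\<phi> x) \<le> b ^ k * (measure (fst (mu i)) (rs C a) + measure (snd (mu i)) (rs C a))" .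
    qed
  qed
  moreover have "(\<lambda>s. indicator {a<..b} s *\<^sub>R \<phi> s) = (\<lambda>s. indicator {a<..b} s * (s ^ k * smeas (mu i) (rs C s)))"
  proof
    fix s show "indicator {a<..b} s *\<^sub>R \<phi> s = indicator {a<..b} s * (s ^ k * smeas (mu i) (rs C s))"
    proof (cases "s \<in> {a<..b}")
      case True
      then have "max s a = s" by simp
      then show ?thesis using True by (simp add: \<phi>_def smeas_def)
    qed simp
  qed
  ultimately show ?thesis by simp
qed

lemma rel4:
  fixes A :: "'a::euclidean_space set" and mu :: "real \<Rightarrow> nat \<Rightarrow> ('a \<times> 'a) measure \<times> ('a \<times> 'a) measure"
  assumes A: "compact A" "A \<noteq> {}" and r: "0 < \<rho>" "\<rho> < \<rho>'" "\<rho>' < R"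
    and SM: "\<forall>e>0. support_measures (parset A e) (mu e)"
    and fin: "\<forall>e. \<rho> < e \<and> e \<le> R \<longrightarrow> emeasure (fst (mu e (DIM('a) - 1))) UNIV < \<infinity> \<and> emeasure (snd (mu e (DIM('a) - 1))) UNIV < \<infinity>"
  shows "measure lborel (parset A R) - measure lborel (parset A \<rho>') =
           integral\<^sup>L lborel (\<lambda>s. indicator {\<rho>' - \<rho><..R - \<rho>} s * (omega 1 * total_mass (mu (\<rho> + s) (DIM('a) - 1))))"
    "integrable lborel (\<lambda>s. indicator {\<rho>' - \<rho><..R - \<rho>} s * (omega 1 * total_mass (mu (\<rho> + s) (DIM('a) - 1))))"
proof -
  define d where "d = DIM('a)"
  define C' where "C' = parset A \<rho>"
  define a where "a = \<rho>' - \<rho>"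
  define b where "b = R - \<rho>"
  have a0: "0 < a" "a \<le> b" using r unfolding a_def b_def by auto
  have SMp: "support_measures C' (mu \<rho>)" using SM r unfolding C'_def by auto
  have C'c: "compact C'" "C' \<noteq> {}" unfolding C'_def using parset_compact[OF A] parset_ne[OF A(2)] r by auto
  have PR: "parset A R = parset C' b" unfolding C'_def b_def using parset_parset[OF A, of \<rho> "R - \<rho>"] r by simp
  have Pr: "parset A \<rho>' = parset C' a" unfolding C'_def a_def using parset_parset[OF A, of \<rho> "\<rho>' - \<rho>"] r by simp
  define E where "E = parset A R - parset A \<rho>'"
  define f where "f = (indicator E :: 'a \<Rightarrow> real)"
  have fR: "f y = (if a < infdist y C' \<and> infdist y C' \<le> b then 1 else 0)" for y
    unfolding f_def E_def PR Pr unfolding parset_def by (auto simp: indicator_def)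
  have Eb: "E \<in> sets borel" unfolding E_def by (intro sets.Diff borel_closed parset_closed)
  have fm: "f \<in> borel_measurable borel" unfolding f_def by (rule borel_measurable_indicator[OF Eb])
  have fb: "bounded (range f)" unfolding f_def by (rule bounded_indicator_range)
  have "{x. f x \<noteq> 0} \<subseteq> parset A R" unfolding f_def E_def by (auto simp: indicator_def)
  hence fs: "bounded {x. f x \<noteq> 0}" using bounded_subset compact_imp_bounded parset_compact[OF A] by blast
  have fC: "f y = 0" if "y \<in> C'" for y using that fR a0 by simp
  have L: "(\<integral>y. indicator (UNIV - C') y * f y \<partial>lborel) = measure lborel (parset A R) - measure lborel (parset A \<rho>')"
  proof -
    have "(\<integral>y. indicator (UNIV - C') y * f y \<partial>lborel) = integral\<^sup>L lborel f"
      by (rule Bochner_Integration.integral_cong) (auto simp: indicator_def fC)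
    also have "\<dots> = measure lborel E" unfolding f_def by simp
    also have "\<dots> = measure lborel (parset A R) - measure lborel (parset A \<rho>')" unfolding E_def
    proof (rule measure_Diff)
      show "emeasure lborel (parset A R) \<noteq> \<infinity>"
        using emeasure_bounded_finite[OF compact_imp_bounded[OF parset_compact[OF A]], of R] by (simp add: less_top)
      show "parset A R \<in> sets lborel" "parset A \<rho>' \<in> sets lborel" by (auto intro: borel_closed parset_closed)
      show "parset A \<rho>' \<subseteq> parset A R" using r unfolding parset_def by auto
    qed
    finally show ?thesis .
  qed
  have St: "(\<integral>y. indicator (UNIV - C') y * f y \<partial>lborel) =
      (\<Sum>i<DIM('a). omega (DIM('a) - i) * (LINT s:{0..}|lborel. s ^ (DIM('a) - i - 1) * indicator {a<..b} s * smeas (mu \<rho> i) (rs C' s)))"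
  proof (rule steiner_apply[OF SMp compact_imp_closed[OF C'c(1)] fm fb fs])
    show "rs C' s \<in> sets borel" if "0 \<le> s" for s using rs_borel[OF compact_imp_closed[OF C'c(1)] that] .
    fix i and s :: real and x u assume i: "i < DIM('a)" and s: "0 \<le> s" and N: "(x, u) \<in> normal_bundle C'"
    note ND = normal_bundleD[OF compact_imp_closed[OF C'c(1)] C'c(2) N]
    show "s ^ (DIM('a) - i - 1) * (if ereal s < local_reach C' x u then 1 else 0) * f (x + s *\<^sub>R u)
           = s ^ (DIM('a) - i - 1) * indicator {a<..b} s * indicator (rs C' s) (x, u)"
    proof (cases "0 < s \<and> ereal s < local_reach C' x u")
      case True
      then have it: "infdist (x + s *\<^sub>R u) C' = s" using ND(4)[of s] by auto
      have "f (x + s *\<^sub>R u) = indicator {a<..b} s" unfolding fR it by (simp add: indicator_def)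
      moreover have "indicator (rs C' s) (x, u) = (1::real)" using True by (simp add: rs_def)
      ultimately show ?thesis using True by simp
    next
      case False
      show ?thesis
      proof (cases "s = 0")
        case True
        then show ?thesis using fC[OF ND(1)] a0 by (simp add: indicator_def)
      next
        case False2: False
        then have nl: "\<not> ereal s < local_reach C' x u" using False s by simp
        then have "indicator (rs C' s) (x, u) = (0::real)" by (simp add: rs_def)
        then show ?thesis using nl by simp
      qed
    qed
  qed
  define g where "g i s = indicator {a<..b} s * (s ^ (d - i - 1) * smeas (mu \<rho> i) (rs C' s))" for i s
  have gi: "integrable lborel (g i)" if "i < d" for i
    unfolding g_def by (rule int_term[OF SMp C'c _ a0]) (use that d_def in simp)
  have T: "(LINT s:{0..}|lborel. s ^ (d - i - 1) * indicator {a<..b} s * smeas (mu \<rho> i) (rs C' s)) = integral\<^sup>L lborel (g i)" for i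
    unfolding set_lebesgue_integral_def g_def using a0
    by (intro Bochner_Integration.integral_cong refl) (auto simp: indicator_def)
  have sumI: "(\<Sum>i<d. omega (d - i) * integral\<^sup>L lborel (g i)) = integral\<^sup>L lborel (\<lambda>s. \<Sum>i<d. omega (d - i) * g i s)"
  proof -
    have "integral\<^sup>L lborel (\<lambda>s. \<Sum>i<d. omega (d - i) * g i s) = (\<Sum>i<d. integral\<^sup>L lborel (\<lambda>s. omega (d - i) * g i s))"
      by (rule Bochner_Integration.integral_sum) (use gi in auto)
    thus ?thesis by simp
  qed
  have sumint: "integrable lborel (\<lambda>s. \<Sum>i<d. omega (d - i) * g i s)"
    by (rule Bochner_Integration.integrable_sum) (use gi in auto)
  have pw: "(\<lambda>s. \<Sum>i<d. omega (d - i) * g i s) = (\<lambda>s. indicator {a<..b} s * (omega 1 * total_mass (mu (\<rho> + s) (d - 1))))"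
  proof
    fix s
    show "(\<Sum>i<d. omega (d - i) * g i s) = indicator {a<..b} s * (omega 1 * total_mass (mu (\<rho> + s) (d - 1)))"
    proof (cases "s \<in> {a<..b}")
      case True
      then have s: "a < s" "s \<le> b" by auto
      have rr: "0 < \<rho>" "\<rho> < \<rho> + s" using r s a0 by auto
      have SMr: "support_measures (parset A (\<rho> + s)) (mu (\<rho> + s))" using SM rr by auto
      have fr: "emeasure (fst (mu (\<rho> + s) (DIM('a) - 1))) UNIV < \<infinity>" "emeasure (snd (mu (\<rho> + s) (DIM('a) - 1))) UNIV < \<infinity>"
        using fin s a0 unfolding b_def by auto
      have "omega 1 * total_mass (mu (\<rho> + s) (d - 1)) = (\<Sum>i<d. omega (d - i) * smeas (mu \<rho> i) (rs C' s) * s ^ (d - 1 - i))"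
        using rel3[OF A rr SMr SM[rule_format, OF r(1)] fr] unfolding d_def C'_def by simp
      also have "\<dots> = (\<Sum>i<d. omega (d - i) * g i s)"
        unfolding g_def using True by (intro sum.cong refl) (simp add: diff_commute)
      finally show ?thesis using True by simp
    next
      case False
      then show ?thesis unfolding g_def by simp
    qed
  qed
  have "measure lborel (parset A R) - measure lborel (parset A \<rho>') = (\<Sum>i<d. omega (d - i) * integral\<^sup>L lborel (g i))"
    using L St T unfolding d_def by simp
  also have "\<dots> = integral\<^sup>L lborel (\<lambda>s. indicator {a<..b} s * (omega 1 * total_mass (mu (\<rho> + s) (d - 1))))"
    using sumI pw by simp
  finally show "measure lborel (parset A R) - measure lborel (parset A \<rho>') =
           integral\<^sup>L lborel (\<lambda>s. indicator {\<rho>' - \<rho><..R - \<rho>} s * (omega 1 * total_mass (mu (\<rho> + s) (DIM('a) - 1))))"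
    unfolding a_def b_def d_def .
  show "integrable lborel (\<lambda>s. indicator {\<rho>' - \<rho><..R - \<rho>} s * (omega 1 * total_mass (mu (\<rho> + s) (DIM('a) - 1))))"
    using sumint pw unfolding a_def b_def d_def by simp
qed

lemma omega1: "omega 1 = 2"
proof -
  have np: "(1/2::real) \<notin> \<int>\<^sub>\<le>\<^sub>0" using nonpos_Ints_nonpos[of "1/2::real"] by auto
  have "Gamma (3 / 2 :: real) = 1 / 2 * Gamma (1 / 2)" using Gamma_plus1[OF np] by simp
  hence "Gamma (3 / 2 :: real) = sqrt pi / 2" by (simp add: Gamma_one_half_real)
  moreover have "pi powr (1 / 2) = sqrt pi" by (simp add: powr_half_sqrt)
  ultimately have "pi powr (1 / 2) / Gamma (3 / 2 :: real) = sqrt pi / (sqrt pi / 2)" by (simp only:)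
  moreover have "omega 1 = pi powr (1 / 2) / Gamma (3 / 2 :: real)" unfolding omega_def by simp
  ultimately have "omega 1 = sqrt pi / (sqrt pi / 2)" by simp
  also have "\<dots> = 2" by simp
  finally show ?thesis .
qed

lemma int_powr:
  fixes \<rho> a b q :: real
  assumes "0 < \<rho>" "0 \<le> a" "a \<le> b" "0 < q"
  shows "integrable lborel (\<lambda>t. indicator {a<..b} t * (\<rho> + t) powr (q - 1))"
    "integral\<^sup>L lborel (\<lambda>t. indicator {a<..b} t * (\<rho> + t) powr (q - 1)) = ((\<rho> + b) powr q - (\<rho> + a) powr q) / q"
proof -
  have cont: "continuous_on {a..b} (\<lambda>t. (\<rho> + t) powr (q - 1))"
    using assms by (intro continuous_intros) auto
  have "set_integrable lborel {a..b} (\<lambda>t. (\<rho> + t) powr (q - 1))"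
    by (rule borel_integrable_atLeastAtMost'[OF cont])
  hence si: "set_integrable lborel {a<..b} (\<lambda>t. (\<rho> + t) powr (q - 1))"
    by (rule set_integrable_subset) auto
  thus "integrable lborel (\<lambda>t. indicator {a<..b} t * (\<rho> + t) powr (q - 1))"
    unfolding set_integrable_def by simp
  have "integral\<^sup>L lborel (\<lambda>t. indicator {a<..b} t * (\<rho> + t) powr (q - 1)) = (LBINT t:{a<..b}. (\<rho> + t) powr (q - 1))"
    unfolding set_lebesgue_integral_def by simp
  also have "\<dots> = (LBINT t=a..b. (\<rho> + t) powr (q - 1))" by (rule interval_integral_Ioc[OF assms(3), symmetric])
  also have "\<dots> = (\<rho> + b) powr q / q - (\<rho> + a) powr q / q"
  proof (rule interval_integral_FTC_finite[OF _ ])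
    show "continuous_on {min a b..max a b} (\<lambda>t. (\<rho> + t) powr (q - 1))" using cont assms by simp
    fix x assume x: "min a b \<le> x" "x \<le> max a b"
    have "((\<lambda>t. (\<rho> + t) powr q / q) has_real_derivative q * (\<rho> + x) powr (q - of_nat 1) * (0 + 1) / q) (at x)"
      using x assms by (intro DERIV_cdivide DERIV_fun_powr DERIV_add DERIV_const DERIV_ident) auto
    hence "((\<lambda>t. (\<rho> + t) powr q / q) has_real_derivative (\<rho> + x) powr (q - 1)) (at x)" using assms by simp
    thus "((\<lambda>t. (\<rho> + t) powr q / q) has_vector_derivative (\<rho> + x) powr (q - 1)) (at x within {min a b..max a b})"
      unfolding has_real_derivative_iff_has_vector_derivative[symmetric] by (rule DERIV_subset) simp
  qed
  finally show "integral\<^sup>L lborel (\<lambda>t. indicator {a<..b} t * (\<rho> + t) powr (q - 1)) = ((\<rho> + b) powr q - (\<rho> + a) powr q) / q"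
    by (simp add: diff_divide_distrib)
qed

lemma est:
  fixes A :: "'a::euclidean_space set" and mu :: "real \<Rightarrow> nat \<Rightarrow> ('a \<times> 'a) measure \<times> ('a \<times> 'a) measure"
    and s L \<eta> \<epsilon>0 \<delta>0 x \<epsilon> :: real
  assumes A: "compact A" "A \<noteq> {}" and q: "0 < real DIM('a) - s"
    and SM: "\<forall>e>0. support_measures (parset A e) (mu e)"
    and fin: "\<forall>e. 0 < e \<and> e < \<epsilon>0 \<longrightarrow> emeasure (fst (mu e (DIM('a) - 1))) UNIV < \<infinity> \<and> emeasure (snd (mu e (DIM('a) - 1))) UNIV < \<infinity>"
    and near: "\<forall>e. 0 < e \<and> e < \<delta>0 \<longrightarrow> \<bar>e powr (s - real (DIM('a) - 1)) * total_mass (mu e (DIM('a) - 1)) - L\<bar> < \<eta>"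
    and x: "0 < x" "x < \<epsilon>" "\<epsilon> < \<epsilon>0" "\<epsilon> < \<delta>0"
  shows "\<bar>measure lborel (parset A \<epsilon>) - measure lborel (parset A x)
           - 2 * L * ((\<epsilon> powr (real DIM('a) - s) - x powr (real DIM('a) - s)) / (real DIM('a) - s))\<bar>
         \<le> 2 * \<eta> * ((\<epsilon> powr (real DIM('a) - s) - x powr (real DIM('a) - s)) / (real DIM('a) - s))"
proof -
  define q where "q = real DIM('a) - s"
  define m where "m r = total_mass (mu r (DIM('a) - 1))" for r
  have q0: "0 < q" using q q_def by simp
  have dd: "s - real (DIM('a) - 1) = - (q - 1)"
    unfolding q_def using DIM_positive[where 'a='a] by (simp add: of_nat_diff)
  have bound: "\<bar>m r - L * r powr (q - 1)\<bar> \<le> \<eta> * r powr (q - 1)" if r: "0 < r" "r < \<delta>0" for r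
  proof -
    have n: "\<bar>r powr (s - real (DIM('a) - 1)) * m r - L\<bar> < \<eta>" using near r unfolding m_def by auto
    have "r powr (s - real (DIM('a) - 1)) = inverse (r powr (q - 1))" unfolding dd using r powr_minus[of r "q - 1"] by simp
    hence "\<bar>m r / r powr (q - 1) - L\<bar> < \<eta>" using n by (simp add: divide_inverse mult.commute)
    moreover have pp: "0 < r powr (q - 1)" using r by simp
    ultimately have "\<bar>m r / r powr (q - 1) - L\<bar> * r powr (q - 1) \<le> \<eta> * r powr (q - 1)" by simp
    moreover have "\<bar>m r / r powr (q - 1) - L\<bar> * r powr (q - 1) = \<bar>m r - L * r powr (q - 1)\<bar>"
    proof -
      have "\<bar>m r / r powr (q - 1) - L\<bar> * r powr (q - 1) = \<bar>(m r / r powr (q - 1) - L) * r powr (q - 1)\<bar>"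
        using pp by (simp add: abs_mult)
      also have "(m r / r powr (q - 1) - L) * r powr (q - 1) = m r - L * r powr (q - 1)"
        using pp by (simp add: field_simps)
      finally show ?thesis .
    qed
    ultimately show ?thesis by simp
  qed
  have r4: "measure lborel (parset A \<epsilon>) - measure lborel (parset A x) =
           integral\<^sup>L lborel (\<lambda>t. indicator {x - x / 2<..\<epsilon> - x / 2} t * (omega 1 * m (x / 2 + t)))"
    "integrable lborel (\<lambda>t. indicator {x - x / 2<..\<epsilon> - x / 2} t * (omega 1 * m (x / 2 + t)))"
    using rel4[OF A, of "x / 2" x \<epsilon> mu] x SM fin unfolding m_def by auto
  have xx: "x - x / 2 = x / 2" by simp
  define f1 where "f1 t = indicator {x / 2<..\<epsilon> - x / 2} t * (2 * m (x / 2 + t))" for t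
  define f2 where "f2 t = indicator {x / 2<..\<epsilon> - x / 2} t * (x / 2 + t) powr (q - 1)" for t
  have G: "measure lborel (parset A \<epsilon>) - measure lborel (parset A x) = integral\<^sup>L lborel f1"
    and f1i: "integrable lborel f1"
    using r4 unfolding xx omega1 f1_def[abs_def] by auto
  have ip1: "0 < x / 2" "0 \<le> x / 2" "x / 2 \<le> \<epsilon> - x / 2" using x by auto
  note ip = int_powr[OF ip1 q0]
  have f2e: "f2 = (\<lambda>t. indicator {x / 2<..\<epsilon> - x / 2} t * (x / 2 + t) powr (q - 1))"
    unfolding f2_def by (rule refl)
  have f2i: "integrable lborel f2" unfolding f2e by (rule ip(1))
  have e1: "x / 2 + (\<epsilon> - x / 2) = \<epsilon>" "x / 2 + x / 2 = x" by simp_all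
  have I: "integral\<^sup>L lborel f2 = (\<epsilon> powr q - x powr q) / q"
    unfolding f2e ip(2) e1 by (rule refl)
  have "\<bar>integral\<^sup>L lborel (\<lambda>t. f1 t - 2 * L * f2 t)\<bar> \<le> integral\<^sup>L lborel (\<lambda>t. 2 * \<eta> * f2 t)"
  proof (rule integral_abs_bound_integral)
    show "integrable lborel (\<lambda>t. f1 t - 2 * L * f2 t)" using f1i f2i by simp
    show "integrable lborel (\<lambda>t. 2 * \<eta> * f2 t)" using f2i by simp
    fix t
    show "\<bar>f1 t - 2 * L * f2 t\<bar> \<le> 2 * \<eta> * f2 t"
    proof (cases "t \<in> {x / 2<..\<epsilon> - x / 2}")
      case True
      then have r: "0 < x / 2 + t" "x / 2 + t < \<delta>0" using x by auto
      have "f1 t - 2 * L * f2 t = 2 * (m (x / 2 + t) - L * (x / 2 + t) powr (q - 1))"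
        unfolding f1_def f2_def using True by (simp add: algebra_simps)
      hence "\<bar>f1 t - 2 * L * f2 t\<bar> = 2 * \<bar>m (x / 2 + t) - L * (x / 2 + t) powr (q - 1)\<bar>"
        by (simp only: abs_mult abs_numeral)
      also have "\<dots> \<le> 2 * (\<eta> * (x / 2 + t) powr (q - 1))" using bound[OF r] by simp
      finally show ?thesis unfolding f2_def using True by simp
    next
      case False
      then show ?thesis unfolding f1_def f2_def by simp
    qed
  qed
  moreover have "integral\<^sup>L lborel (\<lambda>t. f1 t - 2 * L * f2 t) = integral\<^sup>L lborel f1 - 2 * L * integral\<^sup>L lborel f2"
    using f1i f2i by simp
  moreover have "integral\<^sup>L lborel (\<lambda>t. 2 * \<eta> * f2 t) = 2 * \<eta> * integral\<^sup>L lborel f2" by simp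
  ultimately show ?thesis using G I unfolding q_def by simp
qed

lemma step_A:
  fixes A :: "'a::euclidean_space set" and mu :: "real \<Rightarrow> nat \<Rightarrow> ('a \<times> 'a) measure \<times> ('a \<times> 'a) measure"
    and s L \<eta> \<epsilon>0 \<delta>0 \<epsilon> :: real
  assumes A: "compact A" "A \<noteq> {}" and q: "0 < real DIM('a) - s"
    and SM: "\<forall>e>0. support_measures (parset A e) (mu e)"
    and fin: "\<forall>e. 0 < e \<and> e < \<epsilon>0 \<longrightarrow> emeasure (fst (mu e (DIM('a) - 1))) UNIV < \<infinity> \<and> emeasure (snd (mu e (DIM('a) - 1))) UNIV < \<infinity>"
    and near: "\<forall>e. 0 < e \<and> e < \<delta>0 \<longrightarrow> \<bar>e powr (s - real (DIM('a) - 1)) * total_mass (mu e (DIM('a) - 1)) - L\<bar> < \<eta>"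
    and e: "0 < \<epsilon>" "\<epsilon> < \<epsilon>0" "\<epsilon> < \<delta>0"
  shows "\<bar>measure lborel (parset A \<epsilon> - A) - 2 * L * (\<epsilon> powr (real DIM('a) - s) / (real DIM('a) - s))\<bar>
         \<le> 2 * \<eta> * (\<epsilon> powr (real DIM('a) - s) / (real DIM('a) - s))"
proof -
  define q where "q = real DIM('a) - s"
  have q0: "0 < q" using q q_def by simp
  define x where "x n = \<epsilon> / real (Suc (Suc n))" for n
  have x0: "0 < x n" "x n < \<epsilon>" for n
  proof -
    show "0 < x n" unfolding x_def using e by simp
    have "\<epsilon> / real (Suc (Suc n)) < \<epsilon> / 1"
      by (rule divide_strict_left_mono) (use e in auto)
    thus "x n < \<epsilon>" unfolding x_def by simp
  qed
  have \<eta>0: "0 \<le> \<eta>"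
  proof -
    have "\<bar>(\<epsilon> / 2) powr (s - real (DIM('a) - 1)) * total_mass (mu (\<epsilon> / 2) (DIM('a) - 1)) - L\<bar> < \<eta>"
      using near e by auto
    thus ?thesis by linarith
  qed
  define G where "G r = measure lborel (parset A r)" for r
  have bnd: "\<bar>G \<epsilon> - G (x n) - 2 * L * ((\<epsilon> powr q - x n powr q) / q)\<bar> \<le> 2 * \<eta> * (\<epsilon> powr q / q)" for n
  proof -
    have "\<bar>G \<epsilon> - G (x n) - 2 * L * ((\<epsilon> powr q - x n powr q) / q)\<bar> \<le> 2 * \<eta> * ((\<epsilon> powr q - x n powr q) / q)"
      using est[OF A q SM fin near x0(1) x0(2) e(2) e(3)] unfolding G_def q_def .
    also have "\<dots> \<le> 2 * \<eta> * (\<epsilon> powr q / q)"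
      using \<eta>0 q0 by (intro mult_left_mono divide_right_mono) auto
    finally show ?thesis .
  qed
  have xlim: "x \<longlonglongrightarrow> 0"
    unfolding x_def by (intro LIMSEQ_Suc[of "\<lambda>n. \<epsilon> / real n"] LIMSEQ_Suc[of "\<lambda>n. \<epsilon> / real (Suc n)"] LIMSEQ_Suc lim_const_over_n)
  have xq: "(\<lambda>n. x n powr q) \<longlonglongrightarrow> 0"
    by (rule tendsto_zero_powrI[OF xlim tendsto_const _ q0]) (use x0 in \<open>auto intro: always_eventually less_imp_le\<close>)
  have Glim: "(\<lambda>n. G (x n)) \<longlonglongrightarrow> measure lborel A"
  proof -
    have "(\<lambda>n. measure lborel (parset A (x n))) \<longlonglongrightarrow> measure lborel (\<Inter>n. parset A (x n))"
    proof (rule Lim_measure_decseq)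
      show "range (\<lambda>n. parset A (x n)) \<subseteq> sets lborel" by (auto intro: borel_closed parset_closed)
      show "decseq (\<lambda>n. parset A (x n))"
      proof (rule decseq_SucI)
        fix n
        have "x (Suc n) \<le> x n" unfolding x_def using e by (simp add: frac_le)
        thus "parset A (x (Suc n)) \<subseteq> parset A (x n)" unfolding parset_def by auto
      qed
      show "emeasure lborel (parset A (x n)) \<noteq> \<infinity>" for n
        using emeasure_bounded_finite[OF compact_imp_bounded[OF parset_compact[OF A]], of "x n"] by (simp add: less_top)
    qed
    moreover have "(\<Inter>n. parset A (x n)) = A"
    proof
      show "A \<subseteq> (\<Inter>n. parset A (x n))" using parset_sup x0 by (auto intro: less_imp_le)
      show "(\<Inter>n. parset A (x n)) \<subseteq> A"
      proof
        fix y assume "y \<in> (\<Inter>n. parset A (x n))"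
        then have le: "infdist y A \<le> x n" for n unfolding parset_def by auto
        have "infdist y A \<le> 0" by (rule LIMSEQ_le_const[OF xlim]) (use le in blast)
        hence "infdist y A = 0" using infdist_nonneg[of y A] by simp
        thus "y \<in> A" using in_closed_iff_infdist_zero[OF compact_imp_closed[OF A(1)] A(2)] by simp
      qed
    qed
    ultimately show ?thesis unfolding G_def by simp
  qed
  have "(\<lambda>n. \<bar>G \<epsilon> - G (x n) - 2 * L * ((\<epsilon> powr q - x n powr q) / q)\<bar>) \<longlonglongrightarrow>
        \<bar>G \<epsilon> - measure lborel A - 2 * L * ((\<epsilon> powr q - 0) / q)\<bar>"
    by (intro tendsto_rabs tendsto_diff tendsto_const tendsto_mult tendsto_divide Glim xq) (use q0 in simp)
  hence "\<bar>G \<epsilon> - measure lborel A - 2 * L * ((\<epsilon> powr q - 0) / q)\<bar> \<le> 2 * \<eta> * (\<epsilon> powr q / q)"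
    by (rule LIMSEQ_le_const2) (use bnd in blast)
  moreover have "measure lborel (parset A \<epsilon> - A) = G \<epsilon> - measure lborel A"
    unfolding G_def
  proof (rule measure_Diff)
    show "emeasure lborel (parset A \<epsilon>) \<noteq> \<infinity>"
      using emeasure_bounded_finite[OF compact_imp_bounded[OF parset_compact[OF A]], of \<epsilon>] by (simp add: less_top)
    show "parset A \<epsilon> \<in> sets lborel" by (auto intro: borel_closed parset_closed)
    show "A \<in> sets lborel" using A by (auto intro: borel_closed compact_imp_closed)
    show "A \<subseteq> parset A \<epsilon>" using parset_sup[of \<epsilon> A] e by simp
  qed
  ultimately show ?thesis unfolding q_def by simp
qed

theorem mainTheorem5:
  fixes A :: "'a::euclidean_space set" and s L :: real
    and mu :: "real \<Rightarrow> nat \<Rightarrow> ('a \<times> 'a) measure \<times> ('a \<times> 'a) measure"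
  assumes "DIM('a) \<ge> 2" and "compact A" and "A \<noteq> {}"
    and "0 \<le> s" and "s < real DIM('a)"
    and "\<forall>e>0. support_measures (parset A e) (mu e)"
    and "\<forall>\<^sub>F e in at_right 0. emeasure (fst (mu e (DIM('a) - 1))) UNIV < \<infinity>
                              \<and> emeasure (snd (mu e (DIM('a) - 1))) UNIV < \<infinity>"
    and "L \<ge> 0"
    and "((\<lambda>e. e powr (s - real (DIM('a) - 1)) * total_mass (mu e (DIM('a) - 1))) \<longlongrightarrow> L) (at_right 0)"
  shows "((\<lambda>e. e powr (s - real DIM('a)) * measure lborel (parset A e - A))
           \<longlongrightarrow> 2 / (real DIM('a) - s) * L) (at_right 0)"
proof -
  note A = assms(2,3)
  define q where "q = real DIM('a) - s"
  have q0: "0 < q" using assms(5) q_def by simp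
  have qpos: "0 < real DIM('a) - s" using q0 q_def by simp
  obtain \<epsilon>0 where \<epsilon>0: "0 < \<epsilon>0" and fin0: "\<forall>e>0. e < \<epsilon>0 \<longrightarrow> emeasure (fst (mu e (DIM('a) - 1))) UNIV < \<infinity>
                              \<and> emeasure (snd (mu e (DIM('a) - 1))) UNIV < \<infinity>"
    using assms(7) unfolding eventually_at_right_field by auto
  have fin: "\<forall>e. 0 < e \<and> e < \<epsilon>0 \<longrightarrow> emeasure (fst (mu e (DIM('a) - 1))) UNIV < \<infinity> \<and> emeasure (snd (mu e (DIM('a) - 1))) UNIV < \<infinity>"
    using fin0 by auto
  show ?thesis unfolding tendsto_iff
  proof (intro allI impI)
    fix \<eta>' :: real assume \<eta>': "0 < \<eta>'"
    define \<eta> where "\<eta> = \<eta>' * q / 4"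
    have \<eta>0: "0 < \<eta>" unfolding \<eta>_def using \<eta>' q0 by simp
    have "\<forall>\<^sub>F e in at_right 0. dist (e powr (s - real (DIM('a) - 1)) * total_mass (mu e (DIM('a) - 1))) L < \<eta>"
      using assms(9) \<eta>0 unfolding tendsto_iff by blast
    then obtain \<delta>0 where \<delta>0: "0 < \<delta>0" and nr: "\<forall>e>0. e < \<delta>0 \<longrightarrow> dist (e powr (s - real (DIM('a) - 1)) * total_mass (mu e (DIM('a) - 1))) L < \<eta>"
      unfolding eventually_at_right_field by auto
    have near: "\<forall>e. 0 < e \<and> e < \<delta>0 \<longrightarrow> \<bar>e powr (s - real (DIM('a) - 1)) * total_mass (mu e (DIM('a) - 1)) - L\<bar> < \<eta>"
      using nr by (auto simp: dist_real_def)
    show "\<forall>\<^sub>F e in at_right 0. dist (e powr (s - real DIM('a)) * measure lborel (parset A e - A)) (2 / (real DIM('a) - s) * L) < \<eta>'"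
      unfolding eventually_at_right_field
    proof (intro exI[of _ "min \<epsilon>0 \<delta>0"] conjI allI impI)
      show "0 < min \<epsilon>0 \<delta>0" using \<epsilon>0 \<delta>0 by simp
      fix e :: real assume e: "0 < e" "e < min \<epsilon>0 \<delta>0"
      define V where "V = measure lborel (parset A e - A)"
      have SA: "\<bar>V - 2 * L * (e powr q / q)\<bar> \<le> 2 * \<eta> * (e powr q / q)"
        using step_A[OF A qpos assms(6) fin near e(1)] e unfolding V_def q_def by simp
      have pp: "e powr (s - real DIM('a)) * e powr q = 1"
        unfolding q_def using e by (simp add: powr_add[symmetric])
      have ppos: "0 < e powr (s - real DIM('a))" using e by simp
      have "dist (e powr (s - real DIM('a)) * V) (2 / q * L) = \<bar>e powr (s - real DIM('a)) * (V - 2 * L * (e powr q / q))\<bar>"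
      proof -
        have "e powr (s - real DIM('a)) * (V - 2 * L * (e powr q / q)) =
              e powr (s - real DIM('a)) * V - 2 * L / q * (e powr (s - real DIM('a)) * e powr q)"
          by (simp add: algebra_simps)
        also have "\<dots> = e powr (s - real DIM('a)) * V - 2 / q * L" unfolding pp by simp
        finally show ?thesis by (simp add: dist_real_def)
      qed
      also have "\<dots> = e powr (s - real DIM('a)) * \<bar>V - 2 * L * (e powr q / q)\<bar>" using ppos by (simp add: abs_mult)
      also have "\<dots> \<le> e powr (s - real DIM('a)) * (2 * \<eta> * (e powr q / q))"
        using SA ppos by (intro mult_left_mono) auto
      also have "\<dots> = 2 * \<eta> / q * (e powr (s - real DIM('a)) * e powr q)" by (simp add: algebra_simps)
      also have "\<dots> = \<eta>' / 2" unfolding pp \<eta>_def using q0 by simp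
      also have "\<dots> < \<eta>'" using \<eta>' by simp
      finally show "dist (e powr (s - real DIM('a)) * measure lborel (parset A e - A)) (2 / (real DIM('a) - s) * L) < \<eta>'"
        unfolding V_def q_def .
    qed
  qed
qed

end
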